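(* (1) For pairs of partitions $(\lambda,\mu)$ and $(\nu,\sigma)$ with $|\lambda|+|\mu|=|\nu|+|\sigma|=n$, the multiplicity $\dim\operatorname{Hom}_{P_{\nu^*,\sigma^*}}(\operatorname{sgn}_{P_{\nu^*,\sigma^*}},V_{\lambda,\mu})$ equals $0$ if $(\nu,\sigma)\succ(\lambda,\mu)$ and equals $1$ if $(\nu,\sigma)=(\lambda,\mu)$. (2) Let $(\lambda_1,\mu_1)\succ(\lambda_2,\mu_2)\succ\cdots\succ(\lambda_M,\mu_M)$ be all pairs of partitions with $|\lambda_j|+|\mu_j|=n$, and put $P_j=P_{\lambda_j^*,\mu_j^*}$. Then for each $i$, the set of generalized parabolic subgroups $P$ with $\dim\operatorname{Hom}_P(\operatorname{sgn}_P,V_{\lambda_i,\mu_i})>0$ contains $P_i$ and does not contain $P_1,\dots,P_{i-1}$.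
   Context: $B_n$ is realized as the group of $n\times n$ signed permutation matrices, $S_n\ltimes\mathbb{Z}_2^n$. For tuples of positive integers $(p_1,\dots,p_k)$ and $(p_{k+1},\dots,p_l)$ with total sum $n$, the generalized parabolic subgroup $P_{(p_1,\dots,p_k),(p_{k+1},\dots,p_l)}=S_{p_1}\times\cdots\times S_{p_k}\times B_{p_{k+1}}\times\cdots\times B_{p_l}$, where each $S_{p_j}$ permutes the consecutive indices $a+1,\dots,a+p_j$ ($a=p_1+\dots+p_{j-1}$) and each $B_{p_j}$ is generated by those permutations together with the diagonal matrices with $\pm1$ in positions $a+1,\dots,a+p_j$ and $1$ elsewhere; for partitions $\alpha,\beta$, $P_{\alpha,\beta}$ uses their nonzero parts. $\operatorname{sgn}_P$ is the restriction to $P$ of the determinant. $V_\lambda$ is the irreducible representation of $S_{|\lambda|}$ indexed by $\lambda$ in the standard way ($V_{[1,\dots,1]}$ the sign), $\lambda^*$ the transposed partition; $\chi_i$ is the character of $\mathbb{Z}_2^n$ with $\operatorname{diag}(\epsilon_1,\dots,\epsilon_n)\mapsto\epsilon_{i+1}\cdots\epsilon_n$; for $|\lambda|=i$, $V_{\lambda,\mu}=\operatorname{Ind}_{(S_i\times S_{n-i})\ltimes\mathbb{Z}_2^n}^{B_n}(V_\lambda\otimes V_\mu\otimes\chi_i)$ (with $S_i\times S_{n-i}$ permuting $\{1,\dots,i\}$ and $\{i+1,\dots,n\}$, and $\mathbb{Z}_2^n$ acting by $\chi_i$). The order $\succ$ on pairs of partitions: $(\lambda,\mu)\succ(\nu,\sigma)$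 iff $\mu^*>\sigma^*$ in the lexicographic order, or $\mu=\sigma$ and $\lambda^*>\nu^*$ in the lexicographic order. *)

theory Defs
  imports "Jordan_Normal_Form.Determinant" "HOL-Library.Function_Algebras"
    "HOL-Combinatorics.Permutations"
begin

section \<open>The hyperoctahedral group B_n as signed permutation matrices\<close>

text \<open>Indices are 0-based: the paper's index k corresponds to k-1 here.\<close>

definition signed_perm_mats :: "nat \<Rightarrow> int mat set" where
  "signed_perm_mats n = {A \<in> carrier_mat n n.
      (\<forall>i<n. \<forall>j<n. A $$ (i,j) \<in> {-1, 0, 1}) \<and>
      (\<forall>i<n. \<exists>!j. j < n \<and> A $$ (i,j) \<noteq> 0) \<and>
      (\<forall>j<n. \<exists>!i. i < n \<and> A $$ (i,j) \<noteq> 0)}"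

text \<open>Underlying permutation: A e_j = (+-) e_(sp_perm A j).\<close>
definition sp_perm :: "int mat \<Rightarrow> nat \<Rightarrow> nat" where
  "sp_perm A j = (if j < dim_col A then (THE i. i < dim_row A \<and> A $$ (i,j) \<noteq> 0) else j)"

definition sp_sign :: "int mat \<Rightarrow> nat \<Rightarrow> int" where
  "sp_sign A j = A $$ (sp_perm A j, j)"

definition gen_parabolic :: "nat list \<Rightarrow> nat list \<Rightarrow> int mat set" where
  "gen_parabolic \<alpha> \<beta> = (let ps = \<alpha> @ \<beta> in
     {A \<in> signed_perm_mats (sum_list ps).
        \<forall>k < length ps. \<forall>j. sum_list (take k ps) \<le> j \<and> j < sum_list (take (Suc k) ps) \<longrightarrow>
           sum_list (take k ps) \<le> sp_perm A j \<and> sp_perm A j < sum_list (take (Suc k) ps) \<and>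
           (k < length \<alpha> \<longrightarrow> sp_sign A j = 1)})"

definition gen_parabolics :: "nat \<Rightarrow> int mat set set" where
  "gen_parabolics n = {gen_parabolic \<alpha> \<beta> | \<alpha> \<beta>.
      (\<forall>p \<in> set (\<alpha> @ \<beta>). 0 < p) \<and> sum_list (\<alpha> @ \<beta>) = n}"

definition is_partition :: "nat list \<Rightarrow> bool" where
  "is_partition lam \<longleftrightarrow> sorted (rev lam) \<and> (\<forall>p \<in> set lam. 0 < p)"

definition conj_part :: "nat list \<Rightarrow> nat list" where
  "conj_part lam = map (\<lambda>j. length (filter (\<lambda>p. j < p) lam)) [0..<fold max lam 0]"

text \<open>Lexicographic order on partitions (proper prefixes are smaller,
  which agrees with padding by zeros since parts are positive).\<close>
definition lex_gt :: "nat list \<Rightarrow> nat list \<Rightarrow> bool" where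
  "lex_gt a b \<longleftrightarrow> (b, a) \<in> lexord {(x, y). x < y}"

definition pair_succ :: "nat list \<times> nat list \<Rightarrow> nat list \<times> nat list \<Rightarrow> bool" where
  "pair_succ p q \<longleftrightarrow> (let (lam, \<mu>) = p; (\<nu>, \<sigma>) = q in
     lex_gt (conj_part \<mu>) (conj_part \<sigma>) \<or> (\<mu> = \<sigma> \<and> lex_gt (conj_part lam) (conj_part \<nu>)))"

text \<open>Young diagram, tableaux (bijections boxes -> entries {0..<m}),
  tabloids encoded as row-assignment functions entry -> row.\<close>
definition young :: "nat list \<Rightarrow> (nat \<times> nat) set" where
  "young lam = {(r, c). r < length lam \<and> c < lam ! r}"

definition tableaux :: "nat list \<Rightarrow> (nat \<times> nat \<Rightarrow> nat) set" where
  "tableaux lam = {T. bij_betw T (young lam) {0..<sum_list lam}}"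

definition tabloid_of :: "nat list \<Rightarrow> (nat \<times> nat \<Rightarrow> nat) \<Rightarrow> nat \<Rightarrow> nat" where
  "tabloid_of lam T = (\<lambda>e. if e < sum_list lam then fst (THE b. b \<in> young lam \<and> T b = e) else 0)"

definition col_stab :: "nat list \<Rightarrow> (nat \<times> nat \<Rightarrow> nat) \<Rightarrow> (nat \<Rightarrow> nat) set" where
  "col_stab lam T = {\<pi>. \<pi> permutes {0..<sum_list lam} \<and>
      (\<forall>b \<in> young lam. \<exists>b' \<in> young lam. T b' = \<pi> (T b) \<and> snd b' = snd b)}"

definition polytabloid :: "nat list \<Rightarrow> (nat \<times> nat \<Rightarrow> nat) \<Rightarrow> (nat \<Rightarrow> nat) \<Rightarrow> complex" where
  "polytabloid lam T = (\<lambda>r. \<Sum>\<pi> \<in> col_stab lam T.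
      of_int (sign \<pi>) * (if r = tabloid_of lam (\<pi> \<circ> T) then 1 else 0))"

definition scale1 :: "complex \<Rightarrow> ('a \<Rightarrow> complex) \<Rightarrow> ('a \<Rightarrow> complex)" where
  "scale1 c f = (\<lambda>x. c * f x)"
definition scale2 :: "complex \<Rightarrow> ('a \<Rightarrow> 'b \<Rightarrow> complex) \<Rightarrow> ('a \<Rightarrow> 'b \<Rightarrow> complex)" where
  "scale2 c f = (\<lambda>x. scale1 c (f x))"
definition scale3 :: "complex \<Rightarrow> ('a \<Rightarrow> 'b \<Rightarrow> 'c \<Rightarrow> complex) \<Rightarrow> ('a \<Rightarrow> 'b \<Rightarrow> 'c \<Rightarrow> complex)" where
  "scale3 c f = (\<lambda>x. scale2 c (f x))"

text \<open>V_lambda: the Specht module, on which a permutation pi of the entries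
  acts by (pi . f)(r) = f (r o pi) (i.e. pi . {t} = {pi o t}).\<close>
definition specht :: "nat list \<Rightarrow> ((nat \<Rightarrow> nat) \<Rightarrow> complex) set" where
  "specht lam = Modules.module.span scale1 {polytabloid lam T | T. T \<in> tableaux lam}"

section \<open>The representations V_(lambda,mu)\<close>

text \<open>V_lambda tensor V_mu, realised inside functions on pairs of tabloids.\<close>
definition tensor_specht :: "nat list \<Rightarrow> nat list \<Rightarrow> ((nat \<Rightarrow> nat) \<times> (nat \<Rightarrow> nat) \<Rightarrow> complex) set" where
  "tensor_specht lam \<mu> = Modules.module.span scale1
     {(\<lambda>(r1, r2). f r1 * g r2) | f g. f \<in> specht lam \<and> g \<in> specht \<mu>}"

text \<open>H = (S_i x S_(n-i)) semidirect Z_2^n inside B_n.\<close>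
definition young_sub :: "nat \<Rightarrow> nat \<Rightarrow> int mat set" where
  "young_sub i n = {A \<in> signed_perm_mats n. \<forall>j < i. sp_perm A j < i}"

definition chi :: "nat \<Rightarrow> int mat \<Rightarrow> int" where
  "chi i A = (\<Prod>j \<in> {i..<dim_col A}. sp_sign A j)"

text \<open>Action of h in H on V_lambda (x) V_mu (x) chi_i: S_i acts on the entries
  0..<i of the lambda-tabloid, S_(n-i) on entries i..<n (shifted to 0..<n-i)
  of the mu-tabloid, and the diagonal part by chi_i.\<close>
definition act_W :: "nat \<Rightarrow> nat \<Rightarrow> int mat \<Rightarrow> ((nat \<Rightarrow> nat) \<times> (nat \<Rightarrow> nat) \<Rightarrow> complex)
    \<Rightarrow> ((nat \<Rightarrow> nat) \<times> (nat \<Rightarrow> nat) \<Rightarrow> complex)" where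
  "act_W i n h w = (\<lambda>(r1, r2). of_int (chi i h) *
      w (r1 \<circ> (\<lambda>e. if e < i then sp_perm h e else e),
         r2 \<circ> (\<lambda>e. if e < n - i then sp_perm h (e + i) - i else e)))"

text \<open>The induced representation Ind_H^(B_n) W = {f : B_n -> W | f(hg) = h.f(g)},
  with (g . f)(x) = f(x g).\<close>
definition ind_rep :: "nat list \<Rightarrow> nat list \<Rightarrow>
    (int mat \<Rightarrow> (nat \<Rightarrow> nat) \<times> (nat \<Rightarrow> nat) \<Rightarrow> complex) set" where
  "ind_rep lam \<mu> = (let i = sum_list lam; n = sum_list lam + sum_list \<mu> in
     {f. (\<forall>x. x \<notin> signed_perm_mats n \<longrightarrow> f x = 0) \<and>
         (\<forall>g \<in> signed_perm_mats n. f g \<in> tensor_specht lam \<mu>) \<and>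
         (\<forall>h \<in> young_sub i n. \<forall>g \<in> signed_perm_mats n. f (h * g) = act_W i n h (f g))})"

definition act_ind :: "nat \<Rightarrow> int mat \<Rightarrow> (int mat \<Rightarrow> 'w) \<Rightarrow> (int mat \<Rightarrow> 'w::zero)" where
  "act_ind n g f = (\<lambda>x. if x \<in> signed_perm_mats n then f (x * g) else 0)"

text \<open>Hom_P(sgn_P, V_(lambda,mu)): complex-linear maps from the one-dimensional
  representation C (P acting by the determinant) into V_(lambda,mu) that are P-equivariant.\<close>
definition hom_sgn :: "int mat set \<Rightarrow> nat list \<Rightarrow> nat list \<Rightarrow>
    (complex \<Rightarrow> int mat \<Rightarrow> (nat \<Rightarrow> nat) \<times> (nat \<Rightarrow> nat) \<Rightarrow> complex) set" where
  "hom_sgn P lam \<mu> = (let n = sum_list lam + sum_list \<mu> in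
     {\<phi>. (\<forall>c. \<phi> c \<in> ind_rep lam \<mu>) \<and>
         (\<forall>c d. \<phi> (c + d) = \<phi> c + \<phi> d) \<and>
         (\<forall>a c. \<phi> (a * c) = scale2 a (\<phi> c)) \<and>
         (\<forall>g \<in> P. \<forall>c. \<phi> (of_int (det g) * c) = act_ind n g (\<phi> c))})"

definition mult_sgn :: "int mat set \<Rightarrow> nat list \<Rightarrow> nat list \<Rightarrow> nat" where
  "mult_sgn P lam \<mu> = Vector_Spaces.vector_space.dim scale3 (hom_sgn P lam \<mu>)"

end

theory Submission
  imports Defs
begin

definition spm :: "nat \<Rightarrow> (nat \<Rightarrow> nat) \<Rightarrow> (nat \<Rightarrow> int) \<Rightarrow> int mat" where
  "spm n p s = mat n n (\<lambda>(k,j). if k = p j then s j else 0)"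

lemma spm_carrier[simp]: "spm n p s \<in> carrier_mat n n"
  by (simp add: spm_def)

lemma spm_index[simp]: "k < n \<Longrightarrow> j < n \<Longrightarrow> spm n p s $$ (k,j) = (if k = p j then s j else 0)"
  by (simp add: spm_def)

lemma spm_dims[simp]: "dim_row (spm n p s) = n" "dim_col (spm n p s) = n"
  by (auto simp: spm_def)

lemma spm_in:
  assumes p: "p permutes {0..<n}" and s: "\<And>j. j < n \<Longrightarrow> s j \<in> {-1,1}"
  shows "spm n p s \<in> signed_perm_mats n"
proof -
  have pj: "j < n \<Longrightarrow> p j < n" for j using p permutes_in_image by fastforce
  have row: "\<exists>!j. j < n \<and> spm n p s $$ (i,j) \<noteq> 0" if "i < n" for i
  proof -
    obtain j where j: "p j = i" using permutes_surj[OF p] by (metis surjD)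
    hence jn: "j < n" using p that by (metis atLeastLessThan_iff permutes_not_in zero_le)
    show ?thesis
    proof (rule ex1I[of _ j])
      show "j < n \<and> spm n p s $$ (i, j) \<noteq> 0" using jn j s[OF jn] that by auto
      fix j' assume "j' < n \<and> spm n p s $$ (i, j') \<noteq> 0"
      hence "p j' = i" "j' < n" using that by (auto split: if_splits)
      thus "j' = j" using j p by (metis permutes_inj injD)
    qed
  qed
  have col: "\<exists>!i. i < n \<and> spm n p s $$ (i,j) \<noteq> 0" if "j < n" for j
    using that pj[OF that] s[OF that] by (intro ex1I[of _ "p j"]) (auto split: if_splits)
  have ent: "\<And>i j. i < n \<Longrightarrow> j < n \<Longrightarrow> spm n p s $$ (i,j) \<in> {-1,0,1}"
    using s by auto
  show ?thesis unfolding signed_perm_mats_def mem_Collect_eq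
    by (intro conjI allI impI spm_carrier ent row col)
qed

lemma spm_sp_perm:
  assumes p: "p permutes {0..<n}" and s: "\<And>j. j < n \<Longrightarrow> s j \<noteq> 0"
  shows "sp_perm (spm n p s) = p"
proof
  fix j
  show "sp_perm (spm n p s) j = p j"
  proof (cases "j < n")
    case True
    have pj: "p j < n" using p True permutes_in_image by fastforce
    show ?thesis unfolding sp_perm_def using True pj s[OF True]
      by (auto intro!: the_equality split: if_splits)
  next
    case False
    then show ?thesis unfolding sp_perm_def using p by (simp add: permutes_not_in)
  qed
qed

lemma spm_sp_sign:
  assumes p: "p permutes {0..<n}" and s: "\<And>j. j < n \<Longrightarrow> s j \<noteq> 0" and j: "j < n"
  shows "sp_sign (spm n p s) j = s j"
proof -
  have pj: "p j < n" using p j permutes_in_image by fastforce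
  have "sp_perm (spm n p s) j = p j" using spm_sp_perm[OF p s] by simp
  thus ?thesis unfolding sp_sign_def using pj j by simp
qed

lemma B_facts:
  assumes A: "A \<in> signed_perm_mats n"
  shows "A \<in> carrier_mat n n"
    and "\<And>j. j < n \<Longrightarrow> sp_perm A j < n \<and> A $$ (sp_perm A j, j) \<noteq> 0"
    and "\<And>j k. j < n \<Longrightarrow> k < n \<Longrightarrow> k \<noteq> sp_perm A j \<Longrightarrow> A $$ (k, j) = 0"
    and "\<And>j. j \<ge> n \<Longrightarrow> sp_perm A j = j"
proof -
  show C: "A \<in> carrier_mat n n" using A by (simp add: signed_perm_mats_def)
  have col: "\<And>j. j<n \<Longrightarrow> \<exists>!i. i < n \<and> A $$ (i,j) \<noteq> 0" using A by (simp add: signed_perm_mats_def)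
  show *: "sp_perm A j < n \<and> A $$ (sp_perm A j, j) \<noteq> 0" if "j < n" for j
  proof -
    have "sp_perm A j = (THE i. i < n \<and> A $$ (i,j) \<noteq> 0)" using C that by (simp add: sp_perm_def)
    thus ?thesis using theI'[OF col[OF that]] by simp
  qed
  show "A $$ (k, j) = 0" if "j < n" "k < n" "k \<noteq> sp_perm A j" for j k
    using col[OF that(1)] *[OF that(1)] that by blast
  show "sp_perm A j = j" if "j \<ge> n" for j using C that by (simp add: sp_perm_def)
qed

lemma B_perm:
  assumes A: "A \<in> signed_perm_mats n"
  shows "sp_perm A permutes {0..<n}"
proof -
  note F = B_facts[OF A]
  have inj: "inj_on (sp_perm A) {0..<n}"
  proof
    fix a b assume ab: "a \<in> {0..<n}" "b \<in> {0..<n}" "sp_perm A a = sp_perm A b"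
    let ?i = "sp_perm A a"
    have row: "\<exists>!j. j < n \<and> A $$ (?i,j) \<noteq> 0" using A F(2)[of a] ab by (simp add: signed_perm_mats_def)
    thus "a = b" using F(2)[of a] F(2)[of b] ab by auto
  qed
  have img: "sp_perm A ` {0..<n} \<subseteq> {0..<n}" using F(2) by auto
  hence "sp_perm A ` {0..<n} = {0..<n}" using inj by (simp add: endo_inj_surj)
  hence "bij_betw (sp_perm A) {0..<n} {0..<n}" using inj by (simp add: bij_betw_def)
  thus ?thesis using F(4) by (intro bij_imp_permutes) auto
qed

lemma B_sign:
  assumes A: "A \<in> signed_perm_mats n" and j: "j < n"
  shows "sp_sign A j \<in> {-1, 1}"
proof -
  note F = B_facts[OF A]
  have X: "A \<in> carrier_mat n n \<and> (\<forall>i<n. \<forall>j<n. A $$ (i,j) \<in> {-1,0,1}) \<and> (\<forall>i<n. \<exists>!j. j < n \<and> A $$ (i,j) \<noteq> 0) \<and>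
      (\<forall>j<n. \<exists>!i. i < n \<and> A $$ (i,j) \<noteq> 0)" using A unfolding signed_perm_mats_def mem_Collect_eq by assumption
  have "\<forall>i<n. \<forall>j<n. A $$ (i,j) \<in> {-1,0,1}" by (rule conjunct1[OF conjunct2[OF X]])
  moreover have "sp_perm A j < n" using F(2)[OF j] by simp
  ultimately have "A $$ (sp_perm A j, j) \<in> {-1,0,1}" using j by blast
  thus ?thesis using F(2)[OF j] by (auto simp: sp_sign_def)
qed

lemma B_sign_nz: "A \<in> signed_perm_mats n \<Longrightarrow> j < n \<Longrightarrow> sp_sign A j \<noteq> 0"
  using B_sign by fastforce

lemma B_eq_spm:
  assumes A: "A \<in> signed_perm_mats n"
  shows "A = spm n (sp_perm A) (sp_sign A)"
proof -
  note F = B_facts[OF A]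
  show ?thesis
  proof (rule eq_matI)
    fix k j assume k: "k < dim_row (spm n (sp_perm A) (sp_sign A))" and j: "j < dim_col (spm n (sp_perm A) (sp_sign A))"
    hence "k < n" "j < n" by auto
    thus "A $$ (k, j) = spm n (sp_perm A) (sp_sign A) $$ (k, j)"
      using F(3)[of j k] by (auto simp: sp_sign_def)
  qed (use F(1) in auto)
qed

lemma spm_cong:
  assumes "\<And>j. j < n \<Longrightarrow> p j = p' j" "\<And>j. j < n \<Longrightarrow> s j = s' j"
  shows "spm n p s = spm n p' s'"
  using assms by (intro eq_matI) auto

lemma spm_mult:
  assumes q: "q permutes {0..<n}"
  shows "spm n p s * spm n q t = spm n (p \<circ> q) (\<lambda>j. s (q j) * t j)"
proof (rule eq_matI)
  fix k j assume "k < dim_row (spm n (p \<circ> q) (\<lambda>j. s (q j) * t j))" "j < dim_col (spm n (p \<circ> q) (\<lambda>j. s (q j) * t j))"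
  hence k: "k < n" and j: "j < n" by auto
  have qj: "q j < n" using q j permutes_in_image by fastforce
  have "(spm n p s * spm n q t) $$ (k,j) = (\<Sum>l\<in>{0..<n}. spm n p s $$ (k,l) * spm n q t $$ (l,j))"
    using k j by (simp add: scalar_prod_def row_def col_def)
  also have "\<dots> = (\<Sum>l\<in>{0..<n}. if l = q j then spm n p s $$ (k,l) * t j else 0)"
    using j by (intro sum.cong) auto
  also have "\<dots> = spm n p s $$ (k, q j) * t j" using qj by (simp add: sum.delta)
  finally show "(spm n p s * spm n q t) $$ (k,j) = spm n (p \<circ> q) (\<lambda>j. s (q j) * t j) $$ (k, j)"
    using k j qj by simp
qed auto

lemma det_spm:
  assumes p: "p permutes {0..<n}"
  shows "det (spm n p s) = sign p * (\<Prod>j<n. s j)"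
proof -
  let ?P = "{\<pi>. \<pi> permutes {0..<n}}"
  have ip: "inv_into UNIV p permutes {0..<n}" using p by (rule permutes_inv)
  have "det (spm n p s) = (\<Sum>\<pi>\<in>?P. signof \<pi> * (\<Prod>i = 0..<n. spm n p s $$ (i, \<pi> i)))"
    by (rule det_def') simp
  also have "\<dots> = (\<Sum>\<pi>\<in>?P. if \<pi> = inv_into UNIV p then signof \<pi> * (\<Prod>i = 0..<n. spm n p s $$ (i, \<pi> i)) else 0)"
  proof (rule sum.cong[OF refl])
    fix \<pi> assume pi: "\<pi> \<in> ?P"
    show "signof \<pi> * (\<Prod>i = 0..<n. spm n p s $$ (i, \<pi> i)) =
      (if \<pi> = inv_into UNIV p then signof \<pi> * (\<Prod>i = 0..<n. spm n p s $$ (i, \<pi> i)) else 0)"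
    proof (cases "\<pi> = inv_into UNIV p")
      case False
      have "\<exists>i<n. p (\<pi> i) \<noteq> i"
      proof (rule ccontr)
        assume "\<not> ?thesis"
        hence h: "\<forall>i<n. p (\<pi> i) = i" by auto
        have "\<pi> = inv_into UNIV p"
        proof
          fix i show "\<pi> i = inv_into UNIV p i"
          proof (cases "i < n")
            case True thus ?thesis using h p by (metis permutes_inverses(2))
          next
            case False thus ?thesis using pi ip by (simp add: permutes_not_in)
          qed
        qed
        thus False using False by simp
      qed
      then obtain i where i: "i < n" "p (\<pi> i) \<noteq> i" by auto
      have "\<pi> i < n" using pi i permutes_in_image by fastforce
      hence "(\<Prod>i = 0..<n. spm n p s $$ (i, \<pi> i)) = 0" using i
        by (intro prod_zero) (auto intro!: bexI[of _ i])
      thus ?thesis by simp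
    qed simp
  qed
  also have "\<dots> = signof (inv_into UNIV p) * (\<Prod>i = 0..<n. spm n p s $$ (i, inv_into UNIV p i))"
    using ip by (subst sum.delta[OF finite_permutations[OF finite_atLeastLessThan]]) simp
  also have "(\<Prod>i = 0..<n. spm n p s $$ (i, inv_into UNIV p i)) = (\<Prod>i = 0..<n. s (inv_into UNIV p i))"
  proof (rule prod.cong[OF refl])
    fix i assume "i \<in> {0..<n}"
    moreover hence "inv_into UNIV p i < n" using ip permutes_in_image by fastforce
    ultimately show "spm n p s $$ (i, inv_into UNIV p i) = s (inv_into UNIV p i)"
      using p by (simp add: permutes_inverses(1))
  qed
  also have "\<dots> = (\<Prod>j<n. s j)"
    using prod.permute[OF ip, of s] by (simp add: atLeast0LessThan comp_def)
  also have "signof (inv_into UNIV p) = (sign p :: int)"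
    using sign_inverse[of p] p permutation_permutes[of p] by auto
  finally show ?thesis by simp
qed

lemma one_spm: "1\<^sub>m n = spm n id (\<lambda>_. 1)"
  by (intro eq_matI) auto

lemma one_B: "1\<^sub>m n \<in> signed_perm_mats n"
  unfolding one_spm by (rule spm_in) auto

lemma B_mult:
  assumes A: "A \<in> signed_perm_mats n" and B: "B \<in> signed_perm_mats n"
  shows "A * B \<in> signed_perm_mats n"
    and "sp_perm (A * B) = sp_perm A \<circ> sp_perm B"
    and "\<And>j. j < n \<Longrightarrow> sp_sign (A * B) j = sp_sign A (sp_perm B j) * sp_sign B j"
proof -
  have pA: "sp_perm A permutes {0..<n}" and pB: "sp_perm B permutes {0..<n}" using A B by (auto intro: B_perm)
  have AB: "A * B = spm n (sp_perm A \<circ> sp_perm B) (\<lambda>j. sp_sign A (sp_perm B j) * sp_sign B j)"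
    by (subst B_eq_spm[OF A], subst B_eq_spm[OF B], rule spm_mult[OF pB])
  have pAB: "sp_perm A \<circ> sp_perm B permutes {0..<n}" by (rule permutes_compose[OF pB pA])
  have s: "\<And>j. j < n \<Longrightarrow> sp_sign A (sp_perm B j) * sp_sign B j \<in> {-1,1}"
  proof -
    fix j assume j: "j < n"
    have "sp_perm B j < n" using pB j permutes_in_image by fastforce
    thus "sp_sign A (sp_perm B j) * sp_sign B j \<in> {-1,1}"
      using B_sign[OF A] B_sign[OF B j] by fastforce
  qed
  have snz: "\<And>j. j < n \<Longrightarrow> sp_sign A (sp_perm B j) * sp_sign B j \<noteq> 0" using s by fastforce
  show "A * B \<in> signed_perm_mats n" unfolding AB by (rule spm_in[OF pAB s])
  show "sp_perm (A * B) = sp_perm A \<circ> sp_perm B" unfolding AB by (rule spm_sp_perm[OF pAB snz])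
  show "sp_sign (A * B) j = sp_sign A (sp_perm B j) * sp_sign B j" if "j < n" for j
    unfolding AB by (rule spm_sp_sign[OF pAB snz that])
qed

lemma det_B:
  assumes A: "A \<in> signed_perm_mats n"
  shows "det A = sign (sp_perm A) * (\<Prod>j<n. sp_sign A j)"
  by (subst B_eq_spm[OF A], rule det_spm[OF B_perm[OF A]])

definition colh :: "nat list \<Rightarrow> nat \<Rightarrow> nat" where
  "colh lam c = length (filter (\<lambda>p. c < p) lam)"

lemma fold_max_ge: "a \<le> fold max xs a \<and> (\<forall>p\<in>set xs. p \<le> fold max xs (a::nat))"
proof (induction xs arbitrary: a)
  case Nil then show ?case by simp
next
  case (Cons x xs)
  have IH: "max x a \<le> fold max xs (max x a)" "\<forall>p\<in>set xs. p \<le> fold max xs (max x a)" using Cons[of "max x a"] by auto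
  have "a \<le> fold max xs (max x a)" "x \<le> fold max xs (max x a)" using IH(1) by linarith+
  then show ?case using IH(2) by simp
qed

lemma fold_max_in: "fold max xs a = a \<or> fold max xs (a::nat) \<in> set xs"
proof (induction xs arbitrary: a)
  case Nil then show ?case by simp
next
  case (Cons x xs)
  have "fold max xs (max x a) = max x a \<or> fold max xs (max x a) \<in> set xs" by (rule Cons)
  moreover have "max x a = x \<or> max x a = a" by linarith
  ultimately show ?case by auto
qed

lemma conj_length: "length (conj_part lam) = fold max lam 0"
  by (simp add: conj_part_def)

lemma conj_nth: "c < length (conj_part lam) \<Longrightarrow> conj_part lam ! c = colh lam c"
  by (simp add: conj_part_def colh_def)

lemma colh_sum_ind: "colh lam c = (\<Sum>q<length lam. if c < lam ! q then 1 else 0)"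
proof (induction lam)
  case Nil then show ?case by (simp add: colh_def)
next
  case (Cons a lam)
  have "(\<Sum>q<length (a # lam). if c < (a # lam) ! q then 1 else (0::nat)) =
        (if c < a then 1 else 0) + (\<Sum>q<length lam. if c < lam ! q then 1 else 0)"
    by (simp only: length_Cons sum.lessThan_Suc_shift) simp
  then show ?case using Cons by (simp add: colh_def)
qed

lemma colh_sum_min: "(\<Sum>j<c. colh lam j) = (\<Sum>q<length lam. min (lam ! q) c)"
proof (induction c)
  case 0 then show ?case by simp
next
  case (Suc c)
  have "(\<Sum>j<Suc c. colh lam j) = (\<Sum>q<length lam. min (lam ! q) c) + (\<Sum>q<length lam. if c < lam ! q then 1 else 0)"
    using Suc by (simp add: colh_sum_ind)
  also have "\<dots> = (\<Sum>q<length lam. min (lam ! q) (Suc c))"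
    by (subst sum.distrib[symmetric]) (intro sum.cong, auto)
  finally show ?case .
qed

lemma sum_list_nth: "sum_list xs = (\<Sum>q<length xs. xs ! q)"
  by (simp add: sum_list_sum_nth atLeast0LessThan)

lemma sum_take_nth: "k \<le> length xs \<Longrightarrow> sum_list (take k xs) = (\<Sum>q<k. xs ! q)"
  by (simp add: sum_list_nth min_def)

lemma conj_sum_take:
  assumes "c \<le> length (conj_part lam)"
  shows "sum_list (take c (conj_part lam)) = (\<Sum>q<length lam. min (lam ! q) c)"
proof -
  have "sum_list (take c (conj_part lam)) = (\<Sum>j<c. conj_part lam ! j)"
    using assms by (rule sum_take_nth)
  also have "\<dots> = (\<Sum>j<c. colh lam j)" using assms by (intro sum.cong) (auto simp: conj_nth)
  finally show ?thesis by (simp add: colh_sum_min)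
qed

lemma conj_sum: "sum_list (conj_part lam) = sum_list lam"
proof -
  let ?M = "fold max lam 0"
  have "sum_list (conj_part lam) = sum_list (take ?M (conj_part lam))" by (simp add: conj_length)
  also have "\<dots> = (\<Sum>q<length lam. min (lam ! q) ?M)" by (rule conj_sum_take) (simp add: conj_length)
  also have "\<dots> = (\<Sum>q<length lam. lam ! q)"
    using fold_max_ge[of 0 lam] by (intro sum.cong) (auto simp: min_def)
  finally show ?thesis by (simp add: sum_list_nth)
qed

lemma conj_pos: "p \<in> set (conj_part lam) \<Longrightarrow> 0 < p"
proof -
  assume "p \<in> set (conj_part lam)"
  then obtain c where c: "c < fold max lam 0" "p = colh lam c" by (auto simp: conj_part_def colh_def)
  hence "fold max lam 0 \<in> set lam" using fold_max_in[of lam 0] by auto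
  thus "0 < p" using c by (auto simp: colh_def filter_empty_conv)
qed

lemma partition_Cons: "is_partition (a # lam) \<longleftrightarrow> 0 < a \<and> (\<forall>p\<in>set lam. p \<le> a) \<and> is_partition lam"
  by (auto simp: is_partition_def sorted_append)

lemma colh_iff:
  assumes "is_partition lam" "q < length lam"
  shows "q < colh lam c \<longleftrightarrow> c < lam ! q"
  using assms
proof (induction lam arbitrary: q)
  case Nil then show ?case by simp
next
  case (Cons a lam)
  have a: "\<forall>p\<in>set lam. p \<le> a" and lp: "is_partition lam" using Cons.prems partition_Cons by auto
  show ?case
  proof (cases "c < a")
    case False
    hence "filter (\<lambda>p. c < p) lam = []" using a by (auto simp: filter_empty_conv)
    moreover have "\<not> c < (a # lam) ! q"
    proof (cases q)
      case (Suc q')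
      hence "q' < length lam" using Cons.prems(2) by simp
      hence "lam ! q' \<le> a" using a nth_mem by blast
      thus ?thesis using Suc False by simp
    qed (use False in simp)
    ultimately show ?thesis using False by (simp add: colh_def)
  next
    case True
    show ?thesis
    proof (cases q)
      case 0 then show ?thesis using True by (simp add: colh_def)
    next
      case (Suc q')
      have "q' < length lam" using Suc Cons.prems by simp
      then show ?thesis using Cons.IH[OF lp] Suc True by (simp add: colh_def)
    qed
  qed
qed

lemma conj_part_partition:
  "is_partition lam \<Longrightarrow> is_partition (conj_part lam)"
proof -
  assume p: "is_partition lam"
  have "sorted (rev (conj_part lam))"
  proof -
    have "colh lam c' \<le> colh lam c" if "c \<le> c'" for c c'
      unfolding colh_def using that by (induction lam) auto
    thus ?thesis unfolding conj_part_def colh_def[symmetric]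
      by (auto simp: sorted_iff_nth_mono rev_nth)
  qed
  thus ?thesis using conj_pos unfolding is_partition_def by blast
qed

definition rowcounts :: "nat list \<Rightarrow> (nat \<Rightarrow> nat) \<Rightarrow> bool" where
  "rowcounts lam r \<longleftrightarrow> (\<forall>e. sum_list lam \<le> e \<longrightarrow> r e = 0) \<and>
     (\<forall>q. card {e\<in>{0..<sum_list lam}. r e = q} = (if q < length lam then lam ! q else 0))"

lemma rowcounts_range:
  assumes "rowcounts lam r" "e < sum_list lam"
  shows "r e < length lam"
proof (rule ccontr)
  assume "\<not> r e < length lam"
  hence "card {e'\<in>{0..<sum_list lam}. r e' = r e} = 0" using assms(1) by (simp add: rowcounts_def)
  moreover have "e \<in> {e'\<in>{0..<sum_list lam}. r e' = r e}" using assms by simp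
  moreover have "finite {e'\<in>{0..<sum_list lam}. r e' = r e}" by simp
  ultimately show False by (auto simp: card_eq_0_iff)
qed

lemma card_fibers:
  assumes "finite A" "r ` A \<subseteq> {..<(L::nat)}"
  shows "card A = (\<Sum>q<L. card {e\<in>A. r e = q})"
proof -
  have "A = (\<Union>q\<in>{..<L}. {e\<in>A. r e = q})" using assms by auto
  hence "card A = card (\<Union>q\<in>{..<L}. {e\<in>A. r e = q})" by simp
  also have "\<dots> = (\<Sum>q<L. card {e\<in>A. r e = q})"
    using assms by (intro card_UN_disjoint) auto
  finally show ?thesis .
qed

locale blocks =
  fixes lam :: "nat list" and r :: "nat \<Rightarrow> nat" and \<beta> :: "nat list" and D :: "nat \<Rightarrow> nat set"
  assumes part: "is_partition lam"
    and rc: "rowcounts lam r"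
    and Dsub: "\<And>c. c < length \<beta> \<Longrightarrow> D c \<subseteq> {0..<sum_list lam}"
    and Dcard: "\<And>c. c < length \<beta> \<Longrightarrow> card (D c) = \<beta> ! c"
    and Ddisj: "\<And>c c'. c < length \<beta> \<Longrightarrow> c' < length \<beta> \<Longrightarrow> c \<noteq> c' \<Longrightarrow> D c \<inter> D c' = {}"
    and Dinj: "\<And>c. c < length \<beta> \<Longrightarrow> inj_on r (D c)"
begin

definition U :: "nat \<Rightarrow> nat set" where "U c = (\<Union>j\<in>{..<c}. D j)"

lemma U_sub: "c \<le> length \<beta> \<Longrightarrow> U c \<subseteq> {0..<sum_list lam}"
proof
  fix x assume c: "c \<le> length \<beta>" and "x \<in> U c"
  then obtain j where "j < c" "x \<in> D j" by (auto simp: U_def)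
  thus "x \<in> {0..<sum_list lam}" using Dsub[of j] c by auto
qed

lemma fin_D: "c < length \<beta> \<Longrightarrow> finite (D c)"
  using Dsub finite_subset by blast

lemma card_U: "c \<le> length \<beta> \<Longrightarrow> card (U c) = (\<Sum>j<c. \<beta> ! j)"
proof -
  assume c: "c \<le> length \<beta>"
  have "card (U c) = (\<Sum>j<c. card (D j))"
    unfolding U_def using Ddisj fin_D c by (intro card_UN_disjoint) auto
  also have "\<dots> = (\<Sum>j<c. \<beta> ! j)" using Dcard c by (intro sum.cong) auto
  finally show ?thesis .
qed

lemma fiber_D: "c < length \<beta> \<Longrightarrow> card {e\<in>D c. r e = q} \<le> 1"
proof -
  assume c: "c < length \<beta>"
  have "inj_on r {e\<in>D c. r e = q}" using Dinj[OF c] by (auto intro: inj_on_subset)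
  hence "card {e\<in>D c. r e = q} = card (r ` {e\<in>D c. r e = q})" by (rule card_image[symmetric])
  also have "\<dots> \<le> card {q}" by (intro card_mono) auto
  finally show ?thesis by simp
qed

lemma fiber_U_le_c: "c \<le> length \<beta> \<Longrightarrow> card {e\<in>U c. r e = q} \<le> c"
proof -
  assume c: "c \<le> length \<beta>"
  have "{e\<in>U c. r e = q} = (\<Union>j\<in>{..<c}. {e\<in>D j. r e = q})" by (auto simp: U_def)
  hence "card {e\<in>U c. r e = q} \<le> (\<Sum>j<c. card {e\<in>D j. r e = q})" using card_UN_le[of "{..<c}"] by simp
  also have "\<dots> \<le> (\<Sum>j<c. 1)" using c fiber_D by (intro sum_mono) auto
  finally show ?thesis by simp
qed

lemma fiber_U_le_row: "c \<le> length \<beta> \<Longrightarrow> q < length lam \<Longrightarrow> card {e\<in>U c. r e = q} \<le> lam ! q"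
proof -
  assume c: "c \<le> length \<beta>" and q: "q < length lam"
  have "card {e\<in>U c. r e = q} \<le> card {e\<in>{0..<sum_list lam}. r e = q}"
    using U_sub[OF c] by (intro card_mono) auto
  thus ?thesis using rc q by (simp add: rowcounts_def)
qed

lemma card_U_fibers: "c \<le> length \<beta> \<Longrightarrow> card (U c) = (\<Sum>q<length lam. card {e\<in>U c. r e = q})"
proof -
  assume c: "c \<le> length \<beta>"
  have "r ` U c \<subseteq> {..<length lam}" using U_sub[OF c] rowcounts_range[OF rc] by auto
  moreover have "finite (U c)" using U_sub[OF c] finite_subset by blast
  ultimately show ?thesis by (intro card_fibers)
qed

lemma U_bound: "c \<le> length \<beta> \<Longrightarrow> (\<Sum>j<c. \<beta> ! j) \<le> (\<Sum>q<length lam. min (lam ! q) c)"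
proof -
  assume c: "c \<le> length \<beta>"
  have "(\<Sum>j<c. \<beta> ! j) = (\<Sum>q<length lam. card {e\<in>U c. r e = q})"
    using card_U[OF c] card_U_fibers[OF c] by simp
  also have "\<dots> \<le> (\<Sum>q<length lam. min (lam ! q) c)"
    using fiber_U_le_c[OF c] fiber_U_le_row[OF c] by (intro sum_mono) auto
  finally show ?thesis .
qed

lemma not_lex_gt:
  assumes pos: "\<forall>p\<in>set \<beta>. 0 < p"
  shows "\<not> lex_gt \<beta> (conj_part lam)"
proof
  assume "lex_gt \<beta> (conj_part lam)"
  hence "(conj_part lam, \<beta>) \<in> lexord {(x, y). x < y}" by (simp add: lex_gt_def)
  then consider (pre) a v where "\<beta> = conj_part lam @ a # v"
    | (diff) u a b v w where "a < b" "conj_part lam = u @ a # v" "\<beta> = u @ b # w"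
    by (auto simp: lexord_def)
  then show False
  proof cases
    case pre
    let ?M = "length (conj_part lam)"
    have le: "Suc ?M \<le> length \<beta>" using pre by simp
    have "(\<Sum>j<Suc ?M. \<beta> ! j) = sum_list (take (Suc ?M) \<beta>)" using le by (simp add: sum_take_nth)
    also have "\<dots> = sum_list (conj_part lam) + a" using pre by simp
    also have "\<dots> = sum_list lam + a" by (simp add: conj_sum)
    finally have s: "(\<Sum>j<Suc ?M. \<beta> ! j) = sum_list lam + a" .
    have "a > 0" using pos pre by simp
    moreover have "card (U (Suc ?M)) \<le> card {0..<sum_list lam}"
      using U_sub[OF le] by (intro card_mono) simp_all
    ultimately show False using card_U[OF le] s by simp
  next
    case diff
    let ?c = "Suc (length u)"
    have le: "?c \<le> length \<beta>" and lec: "?c \<le> length (conj_part lam)" using diff by auto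
    have "(\<Sum>j<?c. \<beta> ! j) = sum_list (take ?c \<beta>)" using le by (simp add: sum_take_nth)
    also have "\<dots> = sum_list u + b" using diff by simp
    finally have s1: "(\<Sum>j<?c. \<beta> ! j) = sum_list u + b" .
    have "(\<Sum>q<length lam. min (lam ! q) ?c) = sum_list (take ?c (conj_part lam))"
      using conj_sum_take[OF lec] by simp
    also have "\<dots> = sum_list u + a" using diff by simp
    finally show False using U_bound[OF le] s1 diff(1) by simp
  qed
qed

lemma tight:
  assumes beq: "\<beta> = conj_part lam" and c: "c < length \<beta>" and q: "q < length lam"
  shows "card {e\<in>D c. r e = q} = (if c < lam ! q then 1 else 0)"
proof -
  have N: "card {e\<in>U c'. r e = q} = min (lam ! q) c'" if c': "c' \<le> length \<beta>" for c'
  proof -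
    have "(\<Sum>q<length lam. card {e\<in>U c'. r e = q}) = (\<Sum>j<c'. \<beta> ! j)"
      using card_U[OF c'] card_U_fibers[OF c'] by simp
    also have "\<dots> = sum_list (take c' \<beta>)" using c' by (simp add: sum_take_nth)
    also have "\<dots> = (\<Sum>q<length lam. min (lam ! q) c')" using conj_sum_take c' beq by simp
    finally have eq: "(\<Sum>q<length lam. card {e\<in>U c'. r e = q}) = (\<Sum>q<length lam. min (lam ! q) c')" .
    show "card {e\<in>U c'. r e = q} = min (lam ! q) c'"
      by (rule sum_mono_inv[OF eq]) (use fiber_U_le_c[OF c'] fiber_U_le_row[OF c'] q in auto)
  qed
  have "{e\<in>U (Suc c). r e = q} = {e\<in>U c. r e = q} \<union> {e\<in>D c. r e = q}"
    by (auto simp: U_def less_Suc_eq)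
  moreover have "{e\<in>U c. r e = q} \<inter> {e\<in>D c. r e = q} = {}"
  proof (rule ccontr)
    assume "\<not> ?thesis"
    then obtain x j where "j < c" "x \<in> D j" "x \<in> D c" by (auto simp: U_def)
    thus False using Ddisj[of j c] c by auto
  qed
  moreover have "finite {e\<in>U c. r e = q}" "finite {e\<in>D c. r e = q}"
    using U_sub[of c] fin_D[OF c] c by (auto intro: finite_subset[of _ "{0..<sum_list lam}"])
  ultimately have "card {e\<in>U (Suc c). r e = q} = card {e\<in>U c. r e = q} + card {e\<in>D c. r e = q}"
    by (simp add: card_Un_disjoint)
  thus ?thesis using N[of c] N[of "Suc c"] c by auto
qed

end

lemma module_scale1: "Modules.module (scale1 :: complex \<Rightarrow> ('a \<Rightarrow> complex) \<Rightarrow> _)"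
  by unfold_locales (auto simp: scale1_def fun_eq_iff algebra_simps)

lemma span_support:
  assumes "w \<in> Modules.module.span scale1 S"
    and "w x \<noteq> 0"
    and "\<And>v x. v \<in> S \<Longrightarrow> v x \<noteq> 0 \<Longrightarrow> x \<in> Z"
  shows "x \<in> Z"
proof -
  have "\<forall>x. w x \<noteq> 0 \<longrightarrow> x \<in> Z"
  proof (rule module.span_induct_alt[OF module_scale1 assms(1), where h="\<lambda>w. \<forall>x. w x \<noteq> 0 \<longrightarrow> x \<in> Z"])
    show "\<forall>x. (0::'a \<Rightarrow> complex) x \<noteq> 0 \<longrightarrow> x \<in> Z" by simp
  next
    fix c v and y :: "'a \<Rightarrow> complex" assume v: "v \<in> S" and y: "\<forall>x. y x \<noteq> 0 \<longrightarrow> x \<in> Z"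
    show "\<forall>x. (scale1 c v + y) x \<noteq> 0 \<longrightarrow> x \<in> Z"
    proof (intro allI impI)
      fix x assume h: "(scale1 c v + y) x \<noteq> 0"
      show "x \<in> Z"
      proof (cases "v x = 0")
        case True thus ?thesis using h y by (simp add: scale1_def)
      next
        case False thus ?thesis using assms(3)[OF v] by blast
      qed
    qed
  qed
  thus ?thesis using assms(2) by blast
qed

lemma span_base1: "v \<in> S \<Longrightarrow> v \<in> Modules.module.span scale1 S"
  by (rule module.span_base[OF module_scale1])

lemma span_scale1: "v \<in> Modules.module.span scale1 S \<Longrightarrow> scale1 c v \<in> Modules.module.span scale1 S"
  by (rule module.span_scale[OF module_scale1])

lemma span_zero1: "0 \<in> Modules.module.span scale1 S"
  by (rule module.span_zero[OF module_scale1])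

context
  fixes lam :: "nat list" and T :: "nat \<times> nat \<Rightarrow> nat"
  assumes T: "T \<in> tableaux lam"
begin

definition Tinv where "Tinv = inv_into (young lam) T"

lemma T_bij: "bij_betw T (young lam) {0..<sum_list lam}"
  using T by (simp add: tableaux_def)

lemma Tinv_in: "e < sum_list lam \<Longrightarrow> Tinv e \<in> young lam \<and> T (Tinv e) = e"
  using T_bij unfolding Tinv_def
  by (metis atLeastLessThan_iff bij_betw_def f_inv_into_f inv_into_into zero_le)

lemma T_in: "b \<in> young lam \<Longrightarrow> T b < sum_list lam"
  using T_bij by (auto simp: bij_betw_def)

lemma Tinv_T: "b \<in> young lam \<Longrightarrow> Tinv (T b) = b"
  using T_bij unfolding Tinv_def by (simp add: bij_betw_def inv_into_f_f)

lemma T_inj_eq: "b \<in> young lam \<Longrightarrow> b' \<in> young lam \<Longrightarrow> T b = T b' \<longleftrightarrow> b = b'"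
  using T_bij by (auto simp: bij_betw_def inj_on_def)

lemma tabloid_of_eq: "e < sum_list lam \<Longrightarrow> tabloid_of lam T e = fst (Tinv e)"
proof -
  assume e: "e < sum_list lam"
  have "(THE b. b \<in> young lam \<and> T b = e) = Tinv e"
    using Tinv_in[OF e] T_inj_eq Tinv_T by (intro the_equality) auto
  thus ?thesis using e by (simp add: tabloid_of_def)
qed

lemma tabloid_of_out: "\<not> e < sum_list lam \<Longrightarrow> tabloid_of lam T e = 0"
  by (simp add: tabloid_of_def)

lemma comp_tableau: "\<pi> permutes {0..<sum_list lam} \<Longrightarrow> \<pi> \<circ> T \<in> tableaux lam"
  unfolding tableaux_def using T_bij
  by (auto intro: bij_betw_trans permutes_imp_bij)

lemma rowcounts_T: "rowcounts lam (tabloid_of lam T)"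
proof -
  have "card {e\<in>{0..<sum_list lam}. tabloid_of lam T e = q} = (if q < length lam then lam ! q else 0)" for q
  proof -
    have "{e\<in>{0..<sum_list lam}. tabloid_of lam T e = q} = T ` {b\<in>young lam. fst b = q}"
    proof
      show "{e\<in>{0..<sum_list lam}. tabloid_of lam T e = q} \<subseteq> T ` {b\<in>young lam. fst b = q}"
      proof
        fix e assume "e \<in> {e\<in>{0..<sum_list lam}. tabloid_of lam T e = q}"
        hence e: "e < sum_list lam" "fst (Tinv e) = q" using tabloid_of_eq by auto
        thus "e \<in> T ` {b\<in>young lam. fst b = q}" using Tinv_in[OF e(1)] by (metis (mono_tags, lifting) image_eqI mem_Collect_eq)
      qed
      show "T ` {b\<in>young lam. fst b = q} \<subseteq> {e\<in>{0..<sum_list lam}. tabloid_of lam T e = q}"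
        using T_in tabloid_of_eq Tinv_T by auto
    qed
    also have "card \<dots> = card {b\<in>young lam. fst b = q}"
      using T_bij by (intro card_image) (auto simp: bij_betw_def intro: inj_on_subset)
    also have "{b\<in>young lam. fst b = q} = (if q < length lam then (\<lambda>c. (q,c)) ` {..<lam ! q} else {})"
      by (auto simp: young_def)
    also have "card \<dots> = (if q < length lam then lam ! q else 0)"
      by (auto simp: card_image inj_on_def)
    finally show ?thesis .
  qed
  thus ?thesis unfolding rowcounts_def using tabloid_of_out by auto
qed

lemma colstab_iff:
  "\<pi> \<in> col_stab lam T \<longleftrightarrow> \<pi> permutes {0..<sum_list lam} \<and>
     (\<forall>e<sum_list lam. snd (Tinv (\<pi> e)) = snd (Tinv e))"
proof
  assume a: "\<pi> \<in> col_stab lam T"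
  hence p: "\<pi> permutes {0..<sum_list lam}" by (simp add: col_stab_def)
  have "snd (Tinv (\<pi> e)) = snd (Tinv e)" if e: "e < sum_list lam" for e
  proof -
    obtain b' where b': "b' \<in> young lam" "T b' = \<pi> (T (Tinv e))" "snd b' = snd (Tinv e)"
      using a Tinv_in[OF e] unfolding col_stab_def by blast
    hence "Tinv (\<pi> e) = b'" using Tinv_T Tinv_in[OF e] by metis
    thus ?thesis using b' by simp
  qed
  thus "\<pi> permutes {0..<sum_list lam} \<and> (\<forall>e<sum_list lam. snd (Tinv (\<pi> e)) = snd (Tinv e))" using p by blast
next
  assume a: "\<pi> permutes {0..<sum_list lam} \<and> (\<forall>e<sum_list lam. snd (Tinv (\<pi> e)) = snd (Tinv e))"
  have "\<exists>b'\<in>young lam. T b' = \<pi> (T b) \<and> snd b' = snd b" if b: "b \<in> young lam" for b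
  proof -
    have e: "T b < sum_list lam" using T_in[OF b] .
    hence pe: "\<pi> (T b) < sum_list lam" using a permutes_in_image by fastforce
    show ?thesis using Tinv_in[OF pe] a e Tinv_T[OF b] by (intro bexI[of _ "Tinv (\<pi> (T b))"]) auto
  qed
  thus "\<pi> \<in> col_stab lam T" using a by (simp add: col_stab_def)
qed

lemma colstab_permutes: "\<pi> \<in> col_stab lam T \<Longrightarrow> \<pi> permutes {0..<sum_list lam}"
  by (simp add: col_stab_def)

lemma finite_colstab: "finite (col_stab lam T)"
proof -
  have "col_stab lam T \<subseteq> {\<pi>. \<pi> permutes {0..<sum_list lam}}" by (auto simp: col_stab_def)
  thus ?thesis using finite_permutations[of "{0..<sum_list lam}"] finite_subset by auto
qed

lemma colstab_comp: "\<pi> \<in> col_stab lam T \<Longrightarrow> \<sigma> \<in> col_stab lam T \<Longrightarrow> \<pi> \<circ> \<sigma> \<in> col_stab lam T"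
proof -
  assume a: "\<pi> \<in> col_stab lam T" "\<sigma> \<in> col_stab lam T"
  have p: "\<pi> \<circ> \<sigma> permutes {0..<sum_list lam}" using a by (auto intro: permutes_compose simp: col_stab_def)
  have "snd (Tinv (\<pi> (\<sigma> e))) = snd (Tinv e)" if e: "e < sum_list lam" for e
  proof -
    have "\<sigma> e < sum_list lam" using a(2) e permutes_in_image colstab_permutes by fastforce
    thus ?thesis using a e by (simp add: colstab_iff)
  qed
  thus ?thesis using p by (simp add: colstab_iff)
qed

lemma colstab_inv: "\<pi> \<in> col_stab lam T \<Longrightarrow> inv_into UNIV \<pi> \<in> col_stab lam T"
proof -
  assume a: "\<pi> \<in> col_stab lam T"
  have pp: "\<pi> permutes {0..<sum_list lam}" using a by (rule colstab_permutes)
  have p: "inv_into UNIV \<pi> permutes {0..<sum_list lam}" using pp by (rule permutes_inv)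
  have "snd (Tinv (inv_into UNIV \<pi> e)) = snd (Tinv e)" if e: "e < sum_list lam" for e
  proof -
    have ie: "inv_into UNIV \<pi> e < sum_list lam" using p e permutes_in_image by fastforce
    have "snd (Tinv (\<pi> (inv_into UNIV \<pi> e))) = snd (Tinv (inv_into UNIV \<pi> e))"
      using a ie by (simp add: colstab_iff)
    thus ?thesis using pp by (simp add: permutes_inverses(1))
  qed
  thus ?thesis using p by (simp add: colstab_iff)
qed

lemma colstab_id: "id \<in> col_stab lam T"
  by (simp add: colstab_iff permutes_id)

end

lemma tabloid_comp:
  assumes T: "T \<in> tableaux lam" and p: "\<pi> permutes {0..<sum_list lam}"
  shows "tabloid_of lam (\<pi> \<circ> T) = tabloid_of lam T \<circ> inv_into UNIV \<pi>"
proof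
  fix e
  have ip: "inv_into UNIV \<pi> permutes {0..<sum_list lam}" using p by (rule permutes_inv)
  show "tabloid_of lam (\<pi> \<circ> T) e = (tabloid_of lam T \<circ> inv_into UNIV \<pi>) e"
  proof (cases "e < sum_list lam")
    case True
    have ie: "inv_into UNIV \<pi> e < sum_list lam" using ip True permutes_in_image by fastforce
    let ?b = "Tinv lam T (inv_into UNIV \<pi> e)"
    have b: "?b \<in> young lam" "T ?b = inv_into UNIV \<pi> e" using Tinv_in[OF T ie] by auto
    have "(\<pi> \<circ> T) ?b = e" using b p by (simp add: permutes_inverses(1))
    hence "Tinv lam (\<pi> \<circ> T) e = ?b" using Tinv_T[OF comp_tableau[OF T p] b(1)] by simp
    thus ?thesis using True ie tabloid_of_eq[OF T] tabloid_of_eq[OF comp_tableau[OF T p]] by simp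
  next
    case False
    have "\<not> inv_into UNIV \<pi> e < sum_list lam"
      using False ip p by (metis permutes_in_image atLeastLessThan_iff zero_le permutes_inverses(1))
    thus ?thesis using False tabloid_of_out[OF T] tabloid_of_out[OF comp_tableau[OF T p]] by simp
  qed
qed


lemma Tinv_comp:
  assumes T: "T \<in> tableaux lam" and p: "\<pi> permutes {0..<sum_list lam}" and e: "e < sum_list lam"
  shows "Tinv lam (\<pi> \<circ> T) e = Tinv lam T (inv_into UNIV \<pi> e)"
proof -
  have ip: "inv_into UNIV \<pi> permutes {0..<sum_list lam}" using p by (rule permutes_inv)
  have ie: "inv_into UNIV \<pi> e < sum_list lam" using ip e permutes_in_image by fastforce
  let ?b = "Tinv lam T (inv_into UNIV \<pi> e)"
  have b: "?b \<in> young lam" "T ?b = inv_into UNIV \<pi> e" using Tinv_in[OF T ie] by auto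
  have "(\<pi> \<circ> T) ?b = e" using b p by (simp add: permutes_inverses(1))
  thus ?thesis using Tinv_T[OF comp_tableau[OF T p] b(1)] by simp
qed

lemma perm_inv_simps:
  assumes "\<pi> permutes S"
  shows "\<pi> (inv_into UNIV \<pi> x) = x" "inv_into UNIV \<pi> (\<pi> x) = x"
  using assms by (auto simp: permutes_inverses)

lemma polytabloid_comp_aux:
  assumes T: "T \<in> tableaux lam" and p: "\<pi> permutes {0..<sum_list lam}"
  shows "polytabloid lam T (r \<circ> \<pi>) =
    (\<Sum>\<sigma>\<in>col_stab lam T. of_int (sign \<sigma>) * (if r = tabloid_of lam (\<pi> \<circ> \<sigma> \<circ> T) then 1 else 0))"
  unfolding polytabloid_def
proof (rule sum.cong[OF refl])
  fix \<sigma> assume s: "\<sigma> \<in> col_stab lam T"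
  have sT: "\<sigma> \<circ> T \<in> tableaux lam" using comp_tableau[OF T colstab_permutes[OF T s]] .
  have "tabloid_of lam (\<pi> \<circ> \<sigma> \<circ> T) = tabloid_of lam (\<sigma> \<circ> T) \<circ> inv_into UNIV \<pi>"
    using tabloid_comp[OF sT p] by (simp add: o_assoc)
  moreover have "(r = t \<circ> inv_into UNIV \<pi>) \<longleftrightarrow> (r \<circ> \<pi> = t)" for t
  proof
    assume "r = t \<circ> inv_into UNIV \<pi>" thus "r \<circ> \<pi> = t" using perm_inv_simps[OF p] by (auto simp: fun_eq_iff)
  next
    assume h: "r \<circ> \<pi> = t"
    show "r = t \<circ> inv_into UNIV \<pi>"
    proof
      fix x
      have "r x = r (\<pi> (inv_into UNIV \<pi> x))" using perm_inv_simps[OF p] by simp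
      also have "\<dots> = t (inv_into UNIV \<pi> x)" using h by (auto simp: fun_eq_iff)
      finally show "r x = (t \<circ> inv_into UNIV \<pi>) x" by simp
    qed
  qed
  ultimately have "(r \<circ> \<pi> = tabloid_of lam (\<sigma> \<circ> T)) \<longleftrightarrow> (r = tabloid_of lam (\<pi> \<circ> \<sigma> \<circ> T))"
    by simp
  thus "of_int (sign \<sigma>) * (if r \<circ> \<pi> = tabloid_of lam (\<sigma> \<circ> T) then 1 else 0) =
      of_int (sign \<sigma>) * (if r = tabloid_of lam (\<pi> \<circ> \<sigma> \<circ> T) then 1 else (0::complex))"
    by simp
qed

lemma permutation_of: "\<pi> permutes {0..<(n::nat)} \<Longrightarrow> permutation \<pi>"
  using permutation_permutes by blast

lemma sign_conj:
  assumes p: "\<pi> permutes {0..<(n::nat)}" and s: "\<sigma> permutes {0..<n}"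
  shows "sign (\<pi> \<circ> \<sigma> \<circ> inv_into UNIV \<pi>) = sign \<sigma>"
proof -
  have ip: "inv_into UNIV \<pi> permutes {0..<n}" using p by (rule permutes_inv)
  have 1: "sign (\<pi> \<circ> \<sigma> \<circ> inv_into UNIV \<pi>) = sign \<pi> * sign \<sigma> * sign (inv_into UNIV \<pi>)"
    using permutation_of[OF p] permutation_of[OF s] permutation_of[OF ip]
    by (simp only: sign_compose permutation_compose)
  have 2: "sign (inv_into UNIV \<pi>) = sign \<pi>" using sign_inverse permutation_of[OF p] by blast
  show ?thesis unfolding 1 2 by (simp add: mult.commute mult.left_commute)
qed

lemma polytabloid_comp:
  assumes T: "T \<in> tableaux lam" and p: "\<pi> permutes {0..<sum_list lam}"
  shows "polytabloid lam T (r \<circ> \<pi>) = polytabloid lam (\<pi> \<circ> T) r"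
proof -
  let ?i = "inv_into UNIV \<pi>"
  have ip: "?i permutes {0..<sum_list lam}" using p by (rule permutes_inv)
  have pT: "\<pi> \<circ> T \<in> tableaux lam" by (rule comp_tableau[OF T p])
  note pi = perm_inv_simps[OF p]
  have "polytabloid lam T (r \<circ> \<pi>) =
    (\<Sum>\<sigma>\<in>col_stab lam T. of_int (sign \<sigma>) * (if r = tabloid_of lam (\<pi> \<circ> \<sigma> \<circ> T) then 1 else 0))"
    by (rule polytabloid_comp_aux[OF T p])
  also have "\<dots> = polytabloid lam (\<pi> \<circ> T) r"
    unfolding polytabloid_def
  proof (rule sum.reindex_bij_witness[where j = "\<lambda>\<sigma>. \<pi> \<circ> \<sigma> \<circ> ?i" and i = "\<lambda>\<tau>. ?i \<circ> \<tau> \<circ> \<pi>"])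
    fix \<sigma> assume s: "\<sigma> \<in> col_stab lam T"
    show "?i \<circ> (\<pi> \<circ> \<sigma> \<circ> ?i) \<circ> \<pi> = \<sigma>" using pi by (simp add: fun_eq_iff)
    have sp: "\<sigma> permutes {0..<sum_list lam}" using s by (rule colstab_permutes[OF T])
    have perm: "\<pi> \<circ> \<sigma> \<circ> ?i permutes {0..<sum_list lam}"
      using p sp ip by (intro permutes_compose) 
    have "snd (Tinv lam (\<pi> \<circ> T) ((\<pi> \<circ> \<sigma> \<circ> ?i) e)) = snd (Tinv lam (\<pi> \<circ> T) e)" if e: "e < sum_list lam" for e
    proof -
      have ie: "?i e < sum_list lam" using ip e permutes_in_image by fastforce
      have sie: "\<sigma> (?i e) < sum_list lam" using sp ie permutes_in_image by fastforce
      have "(\<pi> \<circ> \<sigma> \<circ> ?i) e < sum_list lam" using p sie permutes_in_image by fastforce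
      hence "Tinv lam (\<pi> \<circ> T) ((\<pi> \<circ> \<sigma> \<circ> ?i) e) = Tinv lam T (\<sigma> (?i e))"
        using Tinv_comp[OF T p] pi by simp
      moreover have "Tinv lam (\<pi> \<circ> T) e = Tinv lam T (?i e)" using Tinv_comp[OF T p e] .
      moreover have "snd (Tinv lam T (\<sigma> (?i e))) = snd (Tinv lam T (?i e))"
        using s ie colstab_iff[OF T] by blast
      ultimately show ?thesis by simp
    qed
    thus "\<pi> \<circ> \<sigma> \<circ> ?i \<in> col_stab lam (\<pi> \<circ> T)" using perm colstab_iff[OF pT] by blast
    have "\<pi> \<circ> \<sigma> \<circ> ?i \<circ> (\<pi> \<circ> T) = \<pi> \<circ> \<sigma> \<circ> T" using pi by (simp add: fun_eq_iff)
    moreover have "sign (\<pi> \<circ> \<sigma> \<circ> ?i) = sign \<sigma>" by (rule sign_conj[OF p sp])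
    ultimately show "of_int (sign (\<pi> \<circ> \<sigma> \<circ> ?i)) * (if r = tabloid_of lam ((\<pi> \<circ> \<sigma> \<circ> ?i) \<circ> (\<pi> \<circ> T)) then 1 else 0) =
      of_int (sign \<sigma>) * (if r = tabloid_of lam (\<pi> \<circ> \<sigma> \<circ> T) then 1 else (0::complex))" by simp
  next
    fix \<tau> assume t: "\<tau> \<in> col_stab lam (\<pi> \<circ> T)"
    show "\<pi> \<circ> (?i \<circ> \<tau> \<circ> \<pi>) \<circ> ?i = \<tau>" using pi by (simp add: fun_eq_iff)
    have tp: "\<tau> permutes {0..<sum_list lam}" using t by (rule colstab_permutes[OF pT])
    have perm: "?i \<circ> \<tau> \<circ> \<pi> permutes {0..<sum_list lam}"
      using p tp ip by (intro permutes_compose)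
    have "snd (Tinv lam T ((?i \<circ> \<tau> \<circ> \<pi>) e)) = snd (Tinv lam T e)" if e: "e < sum_list lam" for e
    proof -
      have pe: "\<pi> e < sum_list lam" using p e permutes_in_image by fastforce
      have tpe: "\<tau> (\<pi> e) < sum_list lam" using tp pe permutes_in_image by fastforce
      have "Tinv lam (\<pi> \<circ> T) (\<tau> (\<pi> e)) = Tinv lam T ((?i \<circ> \<tau> \<circ> \<pi>) e)"
        using Tinv_comp[OF T p tpe] by simp
      moreover have "Tinv lam (\<pi> \<circ> T) (\<pi> e) = Tinv lam T e" using Tinv_comp[OF T p pe] pi by simp
      moreover have "snd (Tinv lam (\<pi> \<circ> T) (\<tau> (\<pi> e))) = snd (Tinv lam (\<pi> \<circ> T) (\<pi> e))"
        using t pe colstab_iff[OF pT] by blast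
      ultimately show ?thesis by simp
    qed
    thus "?i \<circ> \<tau> \<circ> \<pi> \<in> col_stab lam T" using perm colstab_iff[OF T] by blast
  qed
  finally show ?thesis .
qed

lemma polytabloid_colstab:
  assumes T: "T \<in> tableaux lam" and p: "\<pi> \<in> col_stab lam T"
  shows "polytabloid lam T (r \<circ> \<pi>) = of_int (sign \<pi>) * polytabloid lam T r"
proof -
  let ?i = "inv_into UNIV \<pi>"
  have pp: "\<pi> permutes {0..<sum_list lam}" using p by (rule colstab_permutes[OF T])
  note pi = perm_inv_simps[OF pp]
  have ipc: "?i \<in> col_stab lam T" using colstab_inv[OF T p] .
  have "polytabloid lam T (r \<circ> \<pi>) =
    (\<Sum>\<sigma>\<in>col_stab lam T. of_int (sign \<sigma>) * (if r = tabloid_of lam (\<pi> \<circ> \<sigma> \<circ> T) then 1 else 0))"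
    by (rule polytabloid_comp_aux[OF T pp])
  also have "\<dots> = (\<Sum>\<sigma>\<in>col_stab lam T. of_int (sign \<pi>) * (of_int (sign \<sigma>) * (if r = tabloid_of lam (\<sigma> \<circ> T) then 1 else 0)))"
  proof (rule sum.reindex_bij_witness[where j = "\<lambda>\<sigma>. \<pi> \<circ> \<sigma>" and i = "\<lambda>\<tau>. ?i \<circ> \<tau>"])
    fix \<sigma> assume s: "\<sigma> \<in> col_stab lam T"
    show "?i \<circ> (\<pi> \<circ> \<sigma>) = \<sigma>" using pi by (simp add: fun_eq_iff)
    show "\<pi> \<circ> \<sigma> \<in> col_stab lam T" using colstab_comp[OF T p s] .
    have sp: "\<sigma> permutes {0..<sum_list lam}" using s by (rule colstab_permutes[OF T])
    have "sign (\<pi> \<circ> \<sigma>) = sign \<pi> * sign \<sigma>"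
      using permutation_of[OF pp] permutation_of[OF sp] by (simp add: sign_compose)
    moreover have "of_int (sign \<pi>) * of_int (sign \<pi>) = (1::complex)"
      by (simp only: of_int_mult[symmetric] sign_idempotent of_int_1)
    ultimately show "of_int (sign \<pi>) * (of_int (sign (\<pi> \<circ> \<sigma>)) * (if r = tabloid_of lam ((\<pi> \<circ> \<sigma>) \<circ> T) then 1 else 0)) =
      of_int (sign \<sigma>) * (if r = tabloid_of lam (\<pi> \<circ> \<sigma> \<circ> T) then 1 else (0::complex))"
      by (simp add: o_assoc mult.assoc[symmetric])
  next
    fix \<tau> assume t: "\<tau> \<in> col_stab lam T"
    show "\<pi> \<circ> (?i \<circ> \<tau>) = \<tau>" using pi by (simp add: fun_eq_iff)
    show "?i \<circ> \<tau> \<in> col_stab lam T" using colstab_comp[OF T ipc t] .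
  qed
  also have "\<dots> = of_int (sign \<pi>) * polytabloid lam T r"
    by (simp add: polytabloid_def sum_distrib_left)
  finally show ?thesis .
qed

lemma polytabloid_support:
  assumes T: "T \<in> tableaux lam" and "polytabloid lam T r \<noteq> 0"
  shows "\<exists>\<sigma>\<in>col_stab lam T. r = tabloid_of lam (\<sigma> \<circ> T)"
proof (rule ccontr)
  assume "\<not> ?thesis"
  hence "polytabloid lam T r = 0" unfolding polytabloid_def by (intro sum.neutral) auto
  thus False using assms by simp
qed

lemma specht_support:
  assumes "f \<in> specht lam" "f r \<noteq> 0"
  shows "rowcounts lam r"
proof -
  have "r \<in> {r. rowcounts lam r}"
  proof (rule span_support[where w=f and S="{polytabloid lam T |T. T \<in> tableaux lam}"])
    show "f \<in> Modules.module.span scale1 {polytabloid lam T |T. T \<in> tableaux lam}" using assms(1) by (simp add: specht_def)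
    show "f r \<noteq> 0" by (rule assms(2))
  next
    fix v x assume v: "v \<in> {polytabloid lam T |T. T \<in> tableaux lam}" and vx: "v x \<noteq> 0"
    then obtain T where T: "T \<in> tableaux lam" "v = polytabloid lam T" by auto
    then obtain \<sigma> where s: "\<sigma> \<in> col_stab lam T" "x = tabloid_of lam (\<sigma> \<circ> T)"
      using polytabloid_support vx by blast
    have "\<sigma> \<circ> T \<in> tableaux lam" by (rule comp_tableau[OF T(1) colstab_permutes[OF T(1) s(1)]])
    thus "x \<in> {r. rowcounts lam r}" using s(2) rowcounts_T by auto
  qed
  thus ?thesis by simp
qed

lemma tensor_support:
  assumes "w \<in> tensor_specht lam mu" "w (r1, r2) \<noteq> 0"
  shows "rowcounts lam r1 \<and> rowcounts mu r2"
proof -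
  have "(r1, r2) \<in> {(r1, r2). rowcounts lam r1 \<and> rowcounts mu r2}"
  proof (rule span_support[where w=w and S="{(\<lambda>(r1, r2). f r1 * g r2) |f g. f \<in> specht lam \<and> g \<in> specht mu}"])
    show "w \<in> Modules.module.span scale1 {(\<lambda>(r1, r2). f r1 * g r2) |f g. f \<in> specht lam \<and> g \<in> specht mu}"
      using assms(1) by (simp add: tensor_specht_def)
    show "w (r1, r2) \<noteq> 0" by (rule assms(2))
  next
    fix v x assume v: "v \<in> {(\<lambda>(r1, r2). f r1 * g r2) |f g. f \<in> specht lam \<and> g \<in> specht mu}" and vx: "v x \<noteq> 0"
    then obtain f g where fg: "f \<in> specht lam" "g \<in> specht mu" "v = (\<lambda>(r1, r2). f r1 * g r2)" by auto
    obtain x1 x2 where x: "x = (x1, x2)" by fastforce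
    have "f x1 \<noteq> 0" "g x2 \<noteq> 0" using vx fg(3) x by auto
    thus "x \<in> {(r1, r2). rowcounts lam r1 \<and> rowcounts mu r2}" using specht_support fg x by auto
  qed
  thus ?thesis by simp
qed

definition bs :: "nat list \<Rightarrow> nat \<Rightarrow> nat" where "bs ps c = sum_list (take c ps)"

lemma bs_mono: "c \<le> c' \<Longrightarrow> bs ps c \<le> bs ps c'"
proof -
  assume "c \<le> c'"
  hence "take c ps = take c (take c' ps)" by (simp add: min_def)
  hence "take c' ps = take c ps @ drop c (take c' ps)" by (metis append_take_drop_id)
  hence "sum_list (take c' ps) = sum_list (take c ps) + sum_list (drop c (take c' ps))"
    by (metis sum_list_append)
  thus ?thesis by (simp add: bs_def)
qed

lemma bs_Suc: "c < length ps \<Longrightarrow> bs ps (Suc c) = bs ps c + ps ! c"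
  by (simp add: bs_def take_Suc_conv_app_nth)

lemma bs_0[simp]: "bs ps 0 = 0" by (simp add: bs_def)

lemma bs_len: "length ps \<le> c \<Longrightarrow> bs ps c = sum_list ps"
  by (simp add: bs_def)

lemma block_unique:
  assumes "bs ps c \<le> e" "e < bs ps (Suc c)" "bs ps c' \<le> e" "e < bs ps (Suc c')"
  shows "c = c'"
proof (rule ccontr)
  assume "c \<noteq> c'"
  then consider "Suc c \<le> c'" | "Suc c' \<le> c" by linarith
  thus False
  proof cases
    case 1 thus False using bs_mono[OF 1, of ps] assms by linarith
  next
    case 2 thus False using bs_mono[OF 2, of ps] assms by linarith
  qed
qed

lemma block_cover:
  assumes "e < sum_list ps"
  shows "\<exists>c<length ps. bs ps c \<le> e \<and> e < bs ps (Suc c)"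
  using assms
proof (induction ps arbitrary: e)
  case Nil then show ?case by simp
next
  case (Cons a ps)
  show ?case
  proof (cases "e < a")
    case True
    then show ?thesis by (intro exI[of _ 0]) (auto simp: bs_def)
  next
    case False
    hence "e - a < sum_list ps" using Cons.prems by simp
    then obtain c where c: "c < length ps" "bs ps c \<le> e - a" "e - a < bs ps (Suc c)" using Cons.IH by blast
    have "bs (a # ps) (Suc c) = a + bs ps c" "bs (a # ps) (Suc (Suc c)) = a + bs ps (Suc c)" by (simp_all add: bs_def)
    thus ?thesis using c False by (intro exI[of _ "Suc c"]) auto
  qed
qed

definition blk :: "nat list \<Rightarrow> nat \<Rightarrow> nat" where
  "blk ps e = (THE c. c < length ps \<and> bs ps c \<le> e \<and> e < bs ps (Suc c))"

lemma blk:
  assumes "e < sum_list ps"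
  shows "blk ps e < length ps \<and> bs ps (blk ps e) \<le> e \<and> e < bs ps (Suc (blk ps e))"
proof -
  obtain c where c: "c < length ps" "bs ps c \<le> e" "e < bs ps (Suc c)" using block_cover[OF assms] by blast
  have "blk ps e = c" unfolding blk_def
    by (rule the_equality) (use c block_unique in auto)
  thus ?thesis using c by simp
qed

lemma blk_eq: "bs ps c \<le> e \<Longrightarrow> e < bs ps (Suc c) \<Longrightarrow> c < length ps \<Longrightarrow> blk ps e = c"
proof -
  assume c: "bs ps c \<le> e" "e < bs ps (Suc c)" "c < length ps"
  have "e < sum_list ps" using c bs_mono[of "Suc c" "length ps" ps] bs_len[of ps "length ps"] by simp
  thus ?thesis using blk[of e ps] block_unique c by blast
qed

definition T0 :: "nat list \<Rightarrow> nat \<times> nat \<Rightarrow> nat" where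
  "T0 lam = (\<lambda>(q, c). bs (conj_part lam) c + q)"

lemma young_iff_conj:
  assumes lam: "is_partition lam"
  shows "(q, c) \<in> young lam \<longleftrightarrow> c < length (conj_part lam) \<and> q < conj_part lam ! c"
proof
  assume "(q, c) \<in> young lam"
  hence qc: "q < length lam" "c < lam ! q" by (auto simp: young_def)
  have "lam ! q \<le> fold max lam 0" using fold_max_ge[of 0 lam] qc(1) nth_mem by blast
  hence c: "c < length (conj_part lam)" using qc by (simp add: conj_length)
  thus "c < length (conj_part lam) \<and> q < conj_part lam ! c"
    using colh_iff[OF lam qc(1)] qc conj_nth[OF c] by simp
next
  assume a: "c < length (conj_part lam) \<and> q < conj_part lam ! c"
  hence "q < colh lam c" using conj_nth[of c lam] by simp
  moreover hence "q < length lam" unfolding colh_def by (meson length_filter_le order.strict_trans2)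
  ultimately show "(q, c) \<in> young lam" using colh_iff[OF lam] by (simp add: young_def)
qed

lemma T0_tableau:
  assumes lam: "is_partition lam"
  shows "T0 lam \<in> tableaux lam"
proof -
  let ?a = "conj_part lam"
  have m: "sum_list ?a = sum_list lam" by (rule conj_sum)
  have inj: "inj_on (T0 lam) (young lam)"
  proof (rule inj_onI)
    fix b b' assume b: "b \<in> young lam" "b' \<in> young lam" "T0 lam b = T0 lam b'"
    obtain q c where qc: "b = (q,c)" by fastforce
    obtain q' c' where qc': "b' = (q',c')" by fastforce
    have h: "c < length ?a" "q < ?a ! c" "c' < length ?a" "q' < ?a ! c'" using b qc qc' young_iff_conj[OF lam] by auto
    have e1: "bs ?a c \<le> bs ?a c + q" "bs ?a c + q < bs ?a (Suc c)" using h bs_Suc by auto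
    have e2: "bs ?a c' \<le> bs ?a c + q" "bs ?a c + q < bs ?a (Suc c')"
      using h bs_Suc[of c' ?a] b(3) qc qc' by (auto simp: T0_def)
    have "c = c'" using block_unique[OF e1 e2] .
    thus "b = b'" using b(3) qc qc' by (simp add: T0_def)
  qed
  have img: "T0 lam ` young lam = {0..<sum_list lam}"
  proof
    show "T0 lam ` young lam \<subseteq> {0..<sum_list lam}"
    proof
      fix e assume "e \<in> T0 lam ` young lam"
      then obtain q c where qc: "(q,c) \<in> young lam" "e = bs ?a c + q" by (auto simp: T0_def)
      have h: "c < length ?a" "q < ?a ! c" using qc young_iff_conj[OF lam] by auto
      have "e < bs ?a (Suc c)" using h qc bs_Suc by simp
      also have "\<dots> \<le> bs ?a (length ?a)" using h by (intro bs_mono) simp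
      finally show "e \<in> {0..<sum_list lam}" using bs_len[of ?a] m by simp
    qed
    show "{0..<sum_list lam} \<subseteq> T0 lam ` young lam"
    proof
      fix e assume "e \<in> {0..<sum_list lam}"
      hence "e < sum_list ?a" using m by simp
      then obtain c where c: "c < length ?a" "bs ?a c \<le> e" "e < bs ?a (Suc c)" using block_cover by blast
      have "(e - bs ?a c, c) \<in> young lam" using c bs_Suc young_iff_conj[OF lam] by auto
      moreover have "T0 lam (e - bs ?a c, c) = e" using c by (simp add: T0_def)
      ultimately show "e \<in> T0 lam ` young lam" by force
    qed
  qed
  show ?thesis using inj img by (simp add: tableaux_def bij_betw_def)
qed

lemma Tinv_T0:
  assumes lam: "is_partition lam" and e: "e < sum_list lam"
  shows "Tinv lam (T0 lam) e = (e - bs (conj_part lam) (blk (conj_part lam) e), blk (conj_part lam) e)"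
proof -
  let ?a = "conj_part lam" let ?c = "blk ?a e"
  have c: "?c < length ?a" "bs ?a ?c \<le> e" "e < bs ?a (Suc ?c)" using blk[of e ?a] e conj_sum by auto
  have y: "(e - bs ?a ?c, ?c) \<in> young lam" using c bs_Suc young_iff_conj[OF lam] by auto
  have "T0 lam (e - bs ?a ?c, ?c) = e" using c by (simp add: T0_def)
  thus ?thesis using Tinv_T[OF T0_tableau[OF lam] y] by simp
qed

lemma colstab_T0I:
  assumes lam: "is_partition lam" and p: "\<pi> permutes {0..<sum_list lam}"
    and blocks: "\<And>c e. c < length (conj_part lam) \<Longrightarrow> bs (conj_part lam) c \<le> e \<Longrightarrow> e < bs (conj_part lam) (Suc c) \<Longrightarrow>
        bs (conj_part lam) c \<le> \<pi> e \<and> \<pi> e < bs (conj_part lam) (Suc c)"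
  shows "\<pi> \<in> col_stab lam (T0 lam)"
proof -
  let ?a = "conj_part lam"
  have "snd (Tinv lam (T0 lam) (\<pi> e)) = snd (Tinv lam (T0 lam) e)" if e: "e < sum_list lam" for e
  proof -
    have c: "blk ?a e < length ?a" "bs ?a (blk ?a e) \<le> e" "e < bs ?a (Suc (blk ?a e))" using blk[of e ?a] e conj_sum by auto
    have pe: "\<pi> e < sum_list lam" using p e permutes_in_image by fastforce
    have "blk ?a (\<pi> e) = blk ?a e" using blocks[OF c] c(1) by (intro blk_eq) auto
    thus ?thesis using Tinv_T0[OF lam e] Tinv_T0[OF lam pe] by simp
  qed
  thus ?thesis using p colstab_iff[OF T0_tableau[OF lam]] by blast
qed


lemma colstab_distinct:
  assumes T: "T \<in> tableaux lam" and s: "\<sigma> \<in> col_stab lam T" and p: "\<pi> \<in> col_stab lam T"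
    and eq: "tabloid_of lam (\<sigma> \<circ> T) = tabloid_of lam (\<pi> \<circ> T)"
  shows "\<sigma> = \<pi>"
proof -
  have sp: "\<sigma> permutes {0..<sum_list lam}" and pp: "\<pi> permutes {0..<sum_list lam}"
    using s p colstab_permutes[OF T] by auto
  let ?is = "inv_into UNIV \<sigma>" and ?ip = "inv_into UNIV \<pi>"
  have isc: "?is \<in> col_stab lam T" and ipc: "?ip \<in> col_stab lam T" using colstab_inv[OF T] s p by auto
  have isp: "?is permutes {0..<sum_list lam}" and ipp: "?ip permutes {0..<sum_list lam}"
    using sp pp by (auto intro: permutes_inv)
  have eq2: "tabloid_of lam T \<circ> ?is = tabloid_of lam T \<circ> ?ip"
    using eq tabloid_comp[OF T sp] tabloid_comp[OF T pp] by simp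
  have "?is e = ?ip e" for e
  proof (cases "e < sum_list lam")
    case True
    have a: "?is e < sum_list lam" "?ip e < sum_list lam" using True isp ipp permutes_in_image by fastforce+
    have "fst (Tinv lam T (?is e)) = fst (Tinv lam T (?ip e))"
      using fun_cong[OF eq2, of e] tabloid_of_eq[OF T a(1)] tabloid_of_eq[OF T a(2)] by simp
    moreover have "snd (Tinv lam T (?is e)) = snd (Tinv lam T e)" "snd (Tinv lam T (?ip e)) = snd (Tinv lam T e)"
      using isc ipc True colstab_iff[OF T] by blast+
    ultimately have "Tinv lam T (?is e) = Tinv lam T (?ip e)" by (simp add: prod_eq_iff)
    moreover have "T (Tinv lam T (?is e)) = ?is e" "T (Tinv lam T (?ip e)) = ?ip e"
      using Tinv_in[OF T a(1)] Tinv_in[OF T a(2)] by auto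
    ultimately show ?thesis by metis
  next
    case False
    thus ?thesis using isp ipp by (simp add: permutes_not_in)
  qed
  hence "?is = ?ip" by auto
  hence "inv_into UNIV ?is = inv_into UNIV ?ip" by simp
  thus ?thesis using sp pp by (simp add: inv_inv_eq permutes_bij)
qed

lemma polytabloid_at:
  assumes T: "T \<in> tableaux lam" and p: "\<pi> \<in> col_stab lam T"
  shows "polytabloid lam T (tabloid_of lam (\<pi> \<circ> T)) = of_int (sign \<pi>)"
proof -
  have "polytabloid lam T (tabloid_of lam (\<pi> \<circ> T)) =
      (\<Sum>\<sigma>\<in>col_stab lam T. if \<sigma> = \<pi> then of_int (sign \<sigma>) else 0)"
    unfolding polytabloid_def
    by (intro sum.cong refl) (use colstab_distinct[OF T _ p] in auto)
  also have "\<dots> = of_int (sign \<pi>)" using p finite_colstab[OF T] by simp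
  finally show ?thesis .
qed

lemma T0_realize:
  assumes lam: "is_partition lam" and rc: "rowcounts lam r"
    and inj: "\<And>c. c < length (conj_part lam) \<Longrightarrow> inj_on r {bs (conj_part lam) c..<bs (conj_part lam) (Suc c)}"
  shows "\<exists>\<pi>\<in>col_stab lam (T0 lam). r = tabloid_of lam (\<pi> \<circ> T0 lam)"
proof -
  let ?a = "conj_part lam"
  let ?m = "sum_list lam"
  define D where "D c = {bs ?a c..<bs ?a (Suc c)}" for c
  have m: "sum_list ?a = ?m" by (rule conj_sum)
  have Dsub: "D c \<subseteq> {0..<?m}" if "c < length ?a" for c
  proof -
    have "bs ?a (Suc c) \<le> bs ?a (length ?a)" using that by (intro bs_mono) simp
    thus ?thesis using bs_len[of ?a] m by (auto simp: D_def)
  qed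
  interpret B: blocks lam r ?a D
  proof
    show "is_partition lam" by (rule lam)
    show "rowcounts lam r" by (rule rc)
    show "\<And>c. c < length ?a \<Longrightarrow> D c \<subseteq> {0..<?m}" by (rule Dsub)
    show "\<And>c. c < length ?a \<Longrightarrow> card (D c) = ?a ! c" by (simp add: D_def bs_Suc)
    show "\<And>c c'. c < length ?a \<Longrightarrow> c' < length ?a \<Longrightarrow> c \<noteq> c' \<Longrightarrow> D c \<inter> D c' = {}"
      using block_unique by (fastforce simp: D_def)
    show "\<And>c. c < length ?a \<Longrightarrow> inj_on r (D c)" using inj by (simp add: D_def)
  qed
  have uniq: "\<exists>!e'. e' \<in> D c \<and> r e' = q" if c: "c < length ?a" and q: "q < ?a ! c" for c q
  proof -
    have "(q, c) \<in> young lam" using young_iff_conj[OF lam] c q by simp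
    hence qc: "q < length lam" "c < lam ! q" by (auto simp: young_def)
    hence "card {e\<in>D c. r e = q} = 1" using B.tight[OF refl c qc(1)] by simp
    then obtain e' where "{e\<in>D c. r e = q} = {e'}" by (auto simp: card_Suc_eq)
    thus ?thesis by (intro ex1I[of _ e']) auto
  qed
  define \<pi> where "\<pi> e = (if e < ?m then (THE e'. e' \<in> D (blk ?a e) \<and> r e' = e - bs ?a (blk ?a e)) else e)" for e
  have blk_e: "blk ?a e < length ?a \<and> e \<in> D (blk ?a e)" if "e < ?m" for e
    using blk[of e ?a] that m by (auto simp: D_def)
  have pi_prop: "\<pi> e \<in> D (blk ?a e) \<and> r (\<pi> e) = e - bs ?a (blk ?a e)" if e: "e < ?m" for e
  proof -
    have c: "blk ?a e < length ?a" "e \<in> D (blk ?a e)" using blk_e[OF e] by auto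
    hence "e - bs ?a (blk ?a e) < ?a ! blk ?a e" by (auto simp: D_def bs_Suc)
    from theI'[OF uniq[OF c(1) this]] show ?thesis using e by (simp add: \<pi>_def)
  qed
  have pi_D: "\<pi> e \<in> D c" if "c < length ?a" "e \<in> D c" for c e
  proof -
    have "e < ?m" using Dsub[OF that(1)] that(2) by auto
    moreover have "blk ?a e = c" using that by (intro blk_eq) (auto simp: D_def)
    ultimately show ?thesis using pi_prop[of e] by simp
  qed
  have pi_inj: "inj_on \<pi> {0..<?m}"
  proof (rule inj_onI)
    fix x y assume x: "x \<in> {0..<?m}" and y: "y \<in> {0..<?m}" and eq: "\<pi> x = \<pi> y"
    have bx: "blk ?a x < length ?a" "\<pi> x \<in> D (blk ?a x)" using blk_e pi_prop x by auto
    have by': "blk ?a y < length ?a" "\<pi> y \<in> D (blk ?a y)" using blk_e pi_prop y by auto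
    have "blk ?a x = blk ?a y"
    proof (rule ccontr)
      assume ne: "blk ?a x \<noteq> blk ?a y"
      have "\<pi> x \<in> D (blk ?a x) \<inter> D (blk ?a y)" using bx(2) by'(2) eq by simp
      thus False using B.Ddisj[OF bx(1) by'(1) ne] by simp
    qed
    moreover have "r (\<pi> x) = x - bs ?a (blk ?a x)" "r (\<pi> y) = y - bs ?a (blk ?a y)" using pi_prop x y by auto
    moreover have "bs ?a (blk ?a x) \<le> x" "bs ?a (blk ?a y) \<le> y" using blk_e x y by (auto simp: D_def)
    ultimately show "x = y" using eq by simp
  qed
  have pi_img: "\<pi> ` {0..<?m} \<subseteq> {0..<?m}"
  proof
    fix y assume "y \<in> \<pi> ` {0..<?m}"
    then obtain x where x: "x < ?m" "y = \<pi> x" by auto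
    show "y \<in> {0..<?m}" using pi_prop[OF x(1)] blk_e[OF x(1)] Dsub[of "blk ?a x"] x(2) by auto
  qed
  have pi_perm: "\<pi> permutes {0..<?m}"
  proof (rule bij_imp_permutes)
    show "bij_betw \<pi> {0..<?m} {0..<?m}" using pi_inj pi_img by (simp add: bij_betw_def endo_inj_surj)
    show "\<And>x. x \<notin> {0..<?m} \<Longrightarrow> \<pi> x = x" by (simp add: \<pi>_def)
  qed
  have pic: "\<pi> \<in> col_stab lam (T0 lam)"
    by (rule colstab_T0I[OF lam pi_perm]) (use pi_D in \<open>auto simp: D_def\<close>)
  have T0t: "T0 lam \<in> tableaux lam" by (rule T0_tableau[OF lam])
  have "r = tabloid_of lam (\<pi> \<circ> T0 lam)"
  proof
    fix e
    show "r e = tabloid_of lam (\<pi> \<circ> T0 lam) e"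
    proof (cases "e < ?m")
      case False
      thus ?thesis using rc tabloid_of_out[OF comp_tableau[OF T0t pi_perm]] by (simp add: rowcounts_def)
    next
      case True
      let ?c = "blk ?a e" let ?q = "r e"
      have c: "?c < length ?a" "e \<in> D ?c" using blk_e[OF True] by auto
      have q: "?q < length lam" using rowcounts_range[OF rc True] .
      have "card {e'\<in>D ?c. r e' = ?q} \<noteq> 0" using c B.fin_D[OF c(1)] by (auto simp: card_eq_0_iff)
      hence "?c < lam ! ?q" using B.tight[OF refl c(1) q] by (simp split: if_splits)
      hence y: "(?q, ?c) \<in> young lam" using q by (simp add: young_def)
      hence qa: "?q < ?a ! ?c" using young_iff_conj[OF lam] by simp
      have "T0 lam (?q, ?c) \<in> D ?c" using qa c(1) by (simp add: T0_def D_def bs_Suc)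
      have pe: "\<pi> (T0 lam (?q, ?c)) = e"
      proof -
        let ?f = "T0 lam (?q, ?c)"
        have f: "?f \<in> D ?c" using qa c(1) by (simp add: T0_def D_def bs_Suc)
        have "\<pi> ?f \<in> D ?c" "r (\<pi> ?f) = ?q"
        proof -
          have fm: "?f < ?m" using Dsub[OF c(1)] f by auto
          have "blk ?a ?f = ?c" using f c(1) by (intro blk_eq) (auto simp: D_def)
          thus "\<pi> ?f \<in> D ?c" "r (\<pi> ?f) = ?q" using pi_prop[OF fm] by (auto simp: T0_def)
        qed
        thus ?thesis using uniq[OF c(1) qa] c(2) by blast
      qed
      have "tabloid_of lam (\<pi> \<circ> T0 lam) e = fst (Tinv lam (\<pi> \<circ> T0 lam) e)"
        using tabloid_of_eq[OF comp_tableau[OF T0t pi_perm] True] .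
      also have "Tinv lam (\<pi> \<circ> T0 lam) e = (?q, ?c)"
        using Tinv_T[OF comp_tableau[OF T0t pi_perm] y] pe by simp
      finally show ?thesis by (simp add: comp_def)
    qed
  qed
  thus ?thesis using pic by blast
qed

lemma blk_append_left:
  assumes "j < sum_list a"
  shows "blk (a @ b) j = blk a j"
proof -
  have c: "blk a j < length a" "bs a (blk a j) \<le> j" "j < bs a (Suc (blk a j))" using blk[OF assms] by auto
  have "bs (a @ b) (blk a j) = bs a (blk a j)" "bs (a @ b) (Suc (blk a j)) = bs a (Suc (blk a j))"
    using c(1) by (auto simp: bs_def)
  thus ?thesis using c by (intro blk_eq) auto
qed

lemma blk_append_right:
  assumes "sum_list a \<le> j" "j < sum_list a + sum_list b"
  shows "blk (a @ b) j = length a + blk b (j - sum_list a)"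
proof -
  obtain d where d: "j = sum_list a + d" using assms(1) le_iff_add by blast
  have jb: "d < sum_list b" using assms d by simp
  have c: "blk b d < length b" "bs b (blk b d) \<le> d" "d < bs b (Suc (blk b d))" using blk[OF jb] by auto
  have e: "bs (a @ b) (length a + k) = sum_list a + bs b k" for k by (simp add: bs_def)
  have e1: "bs (a @ b) (Suc (length a + blk b d)) = sum_list a + bs b (Suc (blk b d))"
    using e[of "Suc (blk b d)"] by simp
  have "blk (a @ b) j = length a + blk b d"
    by (rule blk_eq) (use c d e[of "blk b d"] e1 in auto)
  thus ?thesis using d by simp
qed

lemma P_elim:
  assumes A: "A \<in> gen_parabolic a b" and j: "j < sum_list (a @ b)"
  shows "blk (a @ b) (sp_perm A j) = blk (a @ b) j"
    and "j < sum_list a \<Longrightarrow> sp_sign A j = 1"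
proof -
  let ?ps = "a @ b"
  have c: "blk ?ps j < length ?ps" "bs ?ps (blk ?ps j) \<le> j" "j < bs ?ps (Suc (blk ?ps j))" using blk[OF j] by auto
  have h: "bs ?ps (blk ?ps j) \<le> sp_perm A j \<and> sp_perm A j < bs ?ps (Suc (blk ?ps j)) \<and>
      (blk ?ps j < length a \<longrightarrow> sp_sign A j = 1)"
    using A c unfolding gen_parabolic_def Let_def bs_def by auto
  show "blk ?ps (sp_perm A j) = blk ?ps j" using h c(1) by (intro blk_eq) auto
  assume ja: "j < sum_list a"
  have "blk ?ps j = blk a j" using blk_append_left[OF ja] .
  moreover have "blk a j < length a" using blk[OF ja] by simp
  ultimately show "sp_sign A j = 1" using h by simp
qed

lemma P_B: "A \<in> gen_parabolic a b \<Longrightarrow> A \<in> signed_perm_mats (sum_list (a @ b))"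
  by (simp add: gen_parabolic_def Let_def)

lemma P_intro:
  assumes A: "A \<in> signed_perm_mats (sum_list (a @ b))"
    and bl: "\<And>j. j < sum_list (a @ b) \<Longrightarrow> blk (a @ b) (sp_perm A j) = blk (a @ b) j"
    and sg: "\<And>j. j < sum_list a \<Longrightarrow> sp_sign A j = 1"
  shows "A \<in> gen_parabolic a b"
proof -
  let ?ps = "a @ b"
  have "bs ?ps k \<le> sp_perm A j \<and> sp_perm A j < bs ?ps (Suc k) \<and> (k < length a \<longrightarrow> sp_sign A j = 1)"
    if k: "k < length ?ps" "bs ?ps k \<le> j" "j < bs ?ps (Suc k)" for k j
  proof -
    have jn: "j < sum_list ?ps" using k bs_mono[of "Suc k" "length ?ps" ?ps] bs_len[of ?ps] by simp
    have bj: "blk ?ps j = k" using k by (intro blk_eq) auto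
    have pj: "sp_perm A j < sum_list ?ps" using B_facts(2)[OF A jn] by simp
    have "blk ?ps (sp_perm A j) = k" using bl[OF jn] bj by simp
    hence 1: "bs ?ps k \<le> sp_perm A j \<and> sp_perm A j < bs ?ps (Suc k)" using blk[OF pj] by simp
    have "k < length a \<Longrightarrow> j < sum_list a"
    proof -
      assume ka: "k < length a"
      have "bs ?ps (Suc k) = bs a (Suc k)" using ka by (simp add: bs_def)
      also have "\<dots> \<le> bs a (length a)" using ka by (intro bs_mono) simp
      finally show ?thesis using k(3) bs_len[of a] by simp
    qed
    thus ?thesis using 1 sg by blast
  qed
  thus ?thesis using A unfolding gen_parabolic_def Let_def bs_def by auto
qed

definition comb :: "nat \<Rightarrow> nat \<Rightarrow> (nat \<Rightarrow> nat) \<Rightarrow> (nat \<Rightarrow> nat) \<Rightarrow> nat \<Rightarrow> nat" where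
  "comb i n p1 p2 e = (if e < i then p1 e else if e < n then p2 (e - i) + i else e)"

definition pi1 :: "nat \<Rightarrow> (nat \<Rightarrow> nat) \<Rightarrow> nat \<Rightarrow> nat" where
  "pi1 i p e = (if e < i then p e else e)"

definition pi2 :: "nat \<Rightarrow> nat \<Rightarrow> (nat \<Rightarrow> nat) \<Rightarrow> nat \<Rightarrow> nat" where
  "pi2 i n p e = (if e < n - i then p (e + i) - i else e)"

lemma act_W_eq: "act_W i n h w (r1, r2) = of_int (chi i h) * w (r1 \<circ> pi1 i (sp_perm h), r2 \<circ> pi2 i n (sp_perm h))"
  by (simp add: act_W_def pi1_def[abs_def] pi2_def[abs_def])

lemma shift_perm:
  fixes i m :: nat
  assumes p: "p permutes {0..<m}"
  shows "(\<lambda>e. if i \<le> e \<and> e < i + m then p (e - i) + i else e) permutes {i..<i+m}"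
    and "sign (\<lambda>e. if i \<le> e \<and> e < i + m then p (e - i) + i else e) = sign p"
proof -
  let ?f = "\<lambda>e::nat. e + i"
  have inj: "inj_on ?f {0..<m}" by (simp add: inj_on_def)
  have img: "?f ` {0..<m} = {i..<i+m}"
  proof
    show "?f ` {0..<m} \<subseteq> {i..<i+m}" by auto
    show "{i..<i+m} \<subseteq> ?f ` {0..<m}"
    proof
      fix x assume "x \<in> {i..<i+m}"
      hence "x = (x - i) + i" "x - i \<in> {0..<m}" by auto
      thus "x \<in> ?f ` {0..<m}" by blast
    qed
  qed
  have eq: "map_permutation {0..<m} ?f p = (\<lambda>e. if i \<le> e \<and> e < i + m then p (e - i) + i else e)"
  proof
    fix e
    show "map_permutation {0..<m} ?f p e = (if i \<le> e \<and> e < i + m then p (e - i) + i else e)"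
    proof (cases "i \<le> e \<and> e < i + m")
      case True
      hence "e \<in> ?f ` {0..<m}" using img by auto
      moreover have "inv_into {0..<m} ?f e = e - i"
        using True by (intro inv_into_f_eq[OF inj]) auto
      ultimately show ?thesis using True by (auto simp add: map_permutation_def restrict_id_def img)
    next
      case False
      hence "e \<notin> ?f ` {0..<m}" using img by auto
      thus ?thesis using False by (auto simp add: map_permutation_def restrict_id_def img)
    qed
  qed
  have bij: "bij_betw ?f {0..<m} {i..<i+m}" using inj img by (simp add: bij_betw_def)
  have "map_permutation {0..<m} ?f p permutes {i..<i+m}"
    by (rule map_permutation_permutes[OF bij p])
  thus "(\<lambda>e. if i \<le> e \<and> e < i + m then p (e - i) + i else e) permutes {i..<i+m}" using eq by simp
  show "sign (\<lambda>e. if i \<le> e \<and> e < i + m then p (e - i) + i else e) = sign p"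
    using sign_map_permutation[OF inj p] eq by simp
qed

lemma comb_perm:
  assumes p1: "p1 permutes {0..<i}" and p2: "p2 permutes {0..<n - i}" and i: "i \<le> n"
  shows "comb i n p1 p2 permutes {0..<n}" and "sign (comb i n p1 p2) = sign p1 * sign p2"
proof -
  let ?s = "\<lambda>e. if i \<le> e \<and> e < i + (n - i) then p2 (e - i) + i else e"
  have s: "?s permutes {i..<n}" "sign ?s = sign p2" using shift_perm[OF p2, of i] i by auto
  have eq: "comb i n p1 p2 = p1 \<circ> ?s"
  proof
    fix e
    show "comb i n p1 p2 e = (p1 \<circ> ?s) e"
    proof (cases "e < i")
      case True thus ?thesis by (simp add: comb_def)
    next
      case False
      have "?s e \<notin> {0..<i}"
      proof (cases "e < n")
        case True
        hence "?s e \<in> {i..<n}" using permutes_in_image[OF s(1), of e] False by simp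
        thus ?thesis by auto
      qed (use False in auto)
      hence "p1 (?s e) = ?s e" by (rule permutes_not_in[OF p1])
      thus ?thesis using False i by (simp add: comb_def)
    qed
  qed
  have p1': "p1 permutes {0..<n}" using p1 i by (auto intro: permutes_subset)
  have s': "?s permutes {0..<n}" using s(1) by (auto intro: permutes_subset)
  show "comb i n p1 p2 permutes {0..<n}" unfolding eq by (rule permutes_compose[OF s' p1'])
  show "sign (comb i n p1 p2) = sign p1 * sign p2" unfolding eq
    using sign_compose[OF permutation_of[OF p1'] permutation_of[OF s']] s(2) by simp
qed

lemma comb_pi:
  assumes p1: "p1 permutes {0..<i}" and p2: "p2 permutes {0..<n - i}" and i: "i \<le> n"
  shows "pi1 i (comb i n p1 p2) = p1" "pi2 i n (comb i n p1 p2) = p2"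
proof -
  show "pi1 i (comb i n p1 p2) = p1"
  proof
    fix e show "pi1 i (comb i n p1 p2) e = p1 e"
      by (cases "e < i") (simp_all add: pi1_def comb_def permutes_not_in[OF p1])
  qed
  show "pi2 i n (comb i n p1 p2) = p2"
  proof
    fix e show "pi2 i n (comb i n p1 p2) e = p2 e"
    proof (cases "e < n - i")
      case True
      hence "\<not> e + i < i" "e + i < n" by auto
      thus ?thesis using True by (simp add: pi2_def comb_def)
    next
      case False thus ?thesis by (simp add: pi2_def permutes_not_in[OF p2])
    qed
  qed
qed

lemma pi_decomp:
  assumes p: "p permutes {0..<n}" and i: "i \<le> n" and pres: "\<And>e. e < i \<Longrightarrow> p e < i"
  shows "pi1 i p permutes {0..<i}" "pi2 i n p permutes {0..<n - i}" "comb i n (pi1 i p) (pi2 i n p) = p"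
proof -
  have inj: "inj p" using p permutes_inj by blast
  have img1: "p ` {0..<i} = {0..<i}"
  proof -
    have "p ` {0..<i} \<subseteq> {0..<i}" using pres by auto
    moreover have "inj_on p {0..<i}" using inj_on_subset[OF inj subset_UNIV] .
    ultimately show ?thesis by (simp add: endo_inj_surj)
  qed
  have hi: "i \<le> p e \<and> p e < n" if "i \<le> e" "e < n" for e
  proof -
    have "p e < n" using p that permutes_in_image by fastforce
    moreover have "\<not> p e < i"
    proof
      assume "p e < i"
      hence "p e \<in> p ` {0..<i}" using img1 by simp
      then obtain e' where e': "e' \<in> {0..<i}" "p e = p e'" by blast
      hence "e' = e" using inj by (simp add: inj_eq)
      thus False using e' that by simp
    qed
    ultimately show ?thesis by simp
  qed
  show "pi1 i p permutes {0..<i}"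
  proof (rule bij_imp_permutes)
    show "bij_betw (pi1 i p) {0..<i} {0..<i}"
    proof -
      have "bij_betw p {0..<i} {0..<i}" using img1 inj_on_subset[OF inj subset_UNIV] by (simp add: bij_betw_def)
      thus ?thesis by (rule bij_betw_cong[THEN iffD1, rotated]) (simp add: pi1_def)
    qed
    show "\<And>x. x \<notin> {0..<i} \<Longrightarrow> pi1 i p x = x" by (simp add: pi1_def)
  qed
  show "pi2 i n p permutes {0..<n - i}"
  proof (rule bij_imp_permutes)
    have im: "pi2 i n p ` {0..<n - i} \<subseteq> {0..<n - i}"
    proof
      fix y assume "y \<in> pi2 i n p ` {0..<n - i}"
      then obtain e where e: "e < n - i" "y = p (e + i) - i" by (auto simp: pi2_def)
      moreover have "e + i < n" using e(1) by simp
      ultimately have "i \<le> p (e + i)" "p (e + i) < n" using hi[of "e + i"] by auto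
      thus "y \<in> {0..<n - i}" using e(2) by simp
    qed
    have ij: "inj_on (pi2 i n p) {0..<n - i}"
    proof (rule inj_onI)
      fix x y assume xy: "x \<in> {0..<n - i}" "y \<in> {0..<n - i}" "pi2 i n p x = pi2 i n p y"
      hence "p (x + i) - i = p (y + i) - i" by (simp add: pi2_def)
      moreover have "i \<le> p (x + i)" "i \<le> p (y + i)" using hi xy by auto
      ultimately have "p (x + i) = p (y + i)" by simp
      thus "x = y" using inj by (simp add: inj_eq)
    qed
    show "bij_betw (pi2 i n p) {0..<n - i} {0..<n - i}" using im ij by (simp add: bij_betw_def endo_inj_surj)
    show "\<And>x. x \<notin> {0..<n - i} \<Longrightarrow> pi2 i n p x = x" by (simp add: pi2_def)
  qed
  show "comb i n (pi1 i p) (pi2 i n p) = p"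
  proof
    fix e show "comb i n (pi1 i p) (pi2 i n p) e = p e"
    proof (cases "e < i")
      case True thus ?thesis by (simp add: comb_def pi1_def)
    next
      case False
      show ?thesis
      proof (cases "e < n")
        case True
        have "e - i < n - i" "e - i + i = e" using True False by auto
        moreover have "i \<le> p e" using hi[of e] True False by simp
        ultimately show ?thesis using True False by (simp add: comb_def pi2_def)
      next
        case False2: False
        thus ?thesis using False by (simp add: comb_def permutes_not_in[OF p])
      qed
    qed
  qed
qed

definition flipm :: "nat \<Rightarrow> nat \<Rightarrow> int mat" where
  "flipm n j = spm n id (\<lambda>l. if l = j then -1 else 1)"

definition trm :: "nat \<Rightarrow> nat \<Rightarrow> nat \<Rightarrow> int mat" where
  "trm n a b = spm n (Transposition.transpose a b) (\<lambda>_. 1)"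

lemma id_permutes: "id permutes S" by (simp add: permutes_id)

lemma flipm_B: "flipm n j \<in> signed_perm_mats n"
  unfolding flipm_def by (rule spm_in) (auto simp: permutes_id)

lemma flipm_perm: "sp_perm (flipm n j) = id"
  unfolding flipm_def by (rule spm_sp_perm) (auto simp: permutes_id)

lemma flipm_sign: "l < n \<Longrightarrow> sp_sign (flipm n j) l = (if l = j then -1 else 1)"
  unfolding flipm_def by (rule spm_sp_sign) (auto simp: permutes_id)

lemma flipm_det: "j < n \<Longrightarrow> det (flipm n j) = -1"
  unfolding flipm_def by (subst det_spm) (auto simp: permutes_id)

lemma flipm_chi: "k < n \<Longrightarrow> chi i (flipm n k) = (if i \<le> k then -1 else 1)"
proof -
  assume k: "k < n"
  have "chi i (flipm n k) = (\<Prod>l\<in>{i..<n}. if l = k then -1 else 1)"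
    unfolding chi_def using flipm_sign by (intro prod.cong) (auto simp: flipm_def)
  also have "\<dots> = (if i \<le> k then -1 else 1)" using k by simp
  finally show ?thesis .
qed

lemma flipm_conj:
  assumes x: "x \<in> signed_perm_mats n" and j: "j < n"
  shows "flipm n (sp_perm x j) * x = x * flipm n j"
proof -
  have px: "sp_perm x permutes {0..<n}" by (rule B_perm[OF x])
  have inj: "inj (sp_perm x)" using px permutes_inj by blast
  have "flipm n (sp_perm x j) * x = spm n (id \<circ> sp_perm x) (\<lambda>l. (if sp_perm x l = sp_perm x j then -1 else 1) * sp_sign x l)"
    unfolding flipm_def by (subst B_eq_spm[OF x], subst spm_mult[OF px]) simp
  also have "\<dots> = spm n (sp_perm x \<circ> id) (\<lambda>l. sp_sign x (id l) * (if l = j then -1 else 1))"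
    using inj by (intro spm_cong) (auto simp: inj_eq)
  also have "\<dots> = x * flipm n j"
    unfolding flipm_def by (subst (2) B_eq_spm[OF x], subst spm_mult) (auto simp: permutes_id)
  finally show ?thesis .
qed

lemma trm_B: "a < n \<Longrightarrow> b < n \<Longrightarrow> trm n a b \<in> signed_perm_mats n"
  unfolding trm_def by (rule spm_in) (auto intro: permutes_swap_id)

lemma trm_perm: "a < n \<Longrightarrow> b < n \<Longrightarrow> sp_perm (trm n a b) = Transposition.transpose a b"
  unfolding trm_def by (rule spm_sp_perm) (auto intro: permutes_swap_id)

lemma trm_sign: "a < n \<Longrightarrow> b < n \<Longrightarrow> l < n \<Longrightarrow> sp_sign (trm n a b) l = 1"
  unfolding trm_def by (subst spm_sp_sign) (auto intro: permutes_swap_id)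

lemma trm_det: "a < n \<Longrightarrow> b < n \<Longrightarrow> a \<noteq> b \<Longrightarrow> det (trm n a b) = -1"
  unfolding trm_def by (subst det_spm) (auto intro: permutes_swap_id simp: sign_swap_id)

definition strm :: "nat \<Rightarrow> nat \<Rightarrow> nat \<Rightarrow> int \<Rightarrow> int mat" where
  "strm n a b c = spm n (Transposition.transpose a b) (\<lambda>l. if l = a \<or> l = b then c else 1)"

lemma strm_facts:
  assumes a: "a < n" and b: "b < n" and c: "c \<in> {-1, 1}"
  shows "strm n a b c \<in> signed_perm_mats n" "sp_perm (strm n a b c) = Transposition.transpose a b"
proof -
  have p: "Transposition.transpose a b permutes {0..<n}" using a b by (auto intro: permutes_swap_id)
  show "strm n a b c \<in> signed_perm_mats n" unfolding strm_def by (rule spm_in[OF p]) (use c in auto)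
  show "sp_perm (strm n a b c) = Transposition.transpose a b" unfolding strm_def
    by (rule spm_sp_perm[OF p]) (use c in auto)
qed

lemma strm_chi:
  assumes a: "a < n" and b: "b < n" and c: "c \<in> {-1, 1}" and ab: "a \<noteq> b"
    and side: "(a < i \<and> b < i) \<or> (i \<le> a \<and> i \<le> b)"
  shows "chi i (strm n a b c) = 1"
proof -
  have p: "Transposition.transpose a b permutes {0..<n}" using a b by (auto intro: permutes_swap_id)
  have "chi i (strm n a b c) = (\<Prod>l\<in>{i..<n}. (if l = a then c else 1) * (if l = b then c else 1))"
    unfolding chi_def strm_def
    by (intro prod.cong) (use ab c in \<open>auto simp: spm_sp_sign[OF p]\<close>)
  also have "\<dots> = (\<Prod>l\<in>{i..<n}. if l = a then c else 1) * (\<Prod>l\<in>{i..<n}. if l = b then c else 1)"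
    by (rule prod.distrib)
  also have "\<dots> = 1" using side a b c by auto
  finally show ?thesis .
qed

lemma strm_conj:
  assumes x: "x \<in> signed_perm_mats n" and a: "a < n" and b: "b < n" and ab: "a \<noteq> b"
  shows "strm n (sp_perm x a) (sp_perm x b) (sp_sign x a * sp_sign x b) * x = x * trm n a b"
proof -
  have px: "sp_perm x permutes {0..<n}" by (rule B_perm[OF x])
  have inj: "inj (sp_perm x)" using px permutes_inj by blast
  have pt: "Transposition.transpose a b permutes {0..<n}" using a b by (auto intro: permutes_swap_id)
  let ?pa = "sp_perm x a" let ?pb = "sp_perm x b" let ?c = "sp_sign x a * sp_sign x b"
  have sa: "sp_sign x a * sp_sign x a = 1" "sp_sign x b * sp_sign x b = 1"
    using B_sign[OF x a] B_sign[OF x b] by auto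
  have "strm n ?pa ?pb ?c * x = spm n (Transposition.transpose ?pa ?pb \<circ> sp_perm x)
      (\<lambda>l. (if sp_perm x l = ?pa \<or> sp_perm x l = ?pb then ?c else 1) * sp_sign x l)"
    unfolding strm_def by (subst B_eq_spm[OF x], subst spm_mult[OF px]) simp
  also have "\<dots> = spm n (sp_perm x \<circ> Transposition.transpose a b) (\<lambda>l. sp_sign x (Transposition.transpose a b l) * 1)"
  proof (rule spm_cong)
    fix l assume l: "l < n"
    show "(Transposition.transpose ?pa ?pb \<circ> sp_perm x) l = (sp_perm x \<circ> Transposition.transpose a b) l"
    proof (cases "l = a \<or> l = b")
      case True thus ?thesis by auto
    next
      case False
      hence "sp_perm x l \<noteq> ?pa" "sp_perm x l \<noteq> ?pb" using inj by (auto simp: inj_eq)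
      thus ?thesis using False by simp
    qed
    show "(if sp_perm x l = ?pa \<or> sp_perm x l = ?pb then ?c else 1) * sp_sign x l =
        sp_sign x (Transposition.transpose a b l) * 1"
    proof (cases "l = a \<or> l = b")
      case True thus ?thesis using sa ab by (auto simp: algebra_simps)
    next
      case False
      hence "sp_perm x l \<noteq> ?pa" "sp_perm x l \<noteq> ?pb" using inj by (auto simp: inj_eq)
      thus ?thesis using False by simp
    qed
  qed
  also have "\<dots> = x * trm n a b"
    unfolding trm_def by (subst (2) B_eq_spm[OF x], subst spm_mult[OF pt]) simp
  finally show ?thesis .
qed

lemma pi_transpose_low:
  assumes "a < i" "b < i"
  shows "pi1 i (Transposition.transpose a b) = Transposition.transpose a b"
    "pi2 i n (Transposition.transpose a b) = id"
proof -
  show "pi1 i (Transposition.transpose a b) = Transposition.transpose a b"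
  proof
    fix e show "pi1 i (Transposition.transpose a b) e = Transposition.transpose a b e"
      using assms by (cases "e < i") (auto simp: pi1_def)
  qed
  show "pi2 i n (Transposition.transpose a b) = id"
  proof
    fix e show "pi2 i n (Transposition.transpose a b) e = id e"
      using assms by (cases "e < n - i") (auto simp: pi2_def)
  qed
qed

lemma pi_transpose_high:
  assumes "i \<le> a" "i \<le> b" "a < n" "b < n"
  shows "pi1 i (Transposition.transpose a b) = id"
    "pi2 i n (Transposition.transpose a b) = Transposition.transpose (a - i) (b - i)"
proof -
  show "pi1 i (Transposition.transpose a b) = id"
  proof
    fix e show "pi1 i (Transposition.transpose a b) e = id e"
      using assms by (cases "e < i") (auto simp: pi1_def)
  qed
  show "pi2 i n (Transposition.transpose a b) = Transposition.transpose (a - i) (b - i)"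
  proof
    fix e show "pi2 i n (Transposition.transpose a b) e = Transposition.transpose (a - i) (b - i) e"
    proof (cases "e < n - i")
      case True
      have "e + i = a \<longleftrightarrow> e = a - i" "e + i = b \<longleftrightarrow> e = b - i" using assms by auto
      thus ?thesis using True assms by (auto simp: pi2_def transpose_def)
    next
      case False
      hence "e \<noteq> a - i" "e \<noteq> b - i" using assms by auto
      thus ?thesis using False by (simp add: pi2_def)
    qed
  qed
qed

lemma hom_sgnD:
  assumes "\<phi> \<in> hom_sgn P lam mu"
  shows "\<phi> 1 \<in> ind_rep lam mu"
    and "\<And>a c. \<phi> (a * c) = scale2 a (\<phi> c)"
    and "\<And>g c. g \<in> P \<Longrightarrow> \<phi> (of_int (det g) * c) = act_ind (sum_list lam + sum_list mu) g (\<phi> c)"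
    and "\<And>c d. \<phi> (c + d) = \<phi> c + \<phi> d"
  using assms by (auto simp: hom_sgn_def Let_def)

lemma ind_repD:
  assumes "f \<in> ind_rep lam mu"
  shows "\<And>x. x \<notin> signed_perm_mats (sum_list lam + sum_list mu) \<Longrightarrow> f x = 0"
    and "\<And>g. g \<in> signed_perm_mats (sum_list lam + sum_list mu) \<Longrightarrow> f g \<in> tensor_specht lam mu"
    and "\<And>h g. h \<in> young_sub (sum_list lam) (sum_list lam + sum_list mu) \<Longrightarrow> g \<in> signed_perm_mats (sum_list lam + sum_list mu) \<Longrightarrow>
          f (h * g) = act_W (sum_list lam) (sum_list lam + sum_list mu) h (f g)"
  using assms by (auto simp: ind_rep_def Let_def)

lemma hom_scale: "\<phi> \<in> hom_sgn P lam mu \<Longrightarrow> \<phi> c = scale2 c (\<phi> 1)"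
  using hom_sgnD(2)[of \<phi> P lam mu c 1] by simp

lemma hom_eigen:
  assumes phi: "\<phi> \<in> hom_sgn P lam mu" and g: "g \<in> P"
    and x: "x \<in> signed_perm_mats (sum_list lam + sum_list mu)"
    and k: "k \<in> young_sub (sum_list lam) (sum_list lam + sum_list mu)" and kx: "k * x = x * g"
  shows "act_W (sum_list lam) (sum_list lam + sum_list mu) k (\<phi> 1 x) p = of_int (det g) * \<phi> 1 x p"
proof -
  let ?n = "sum_list lam + sum_list mu"
  have "\<phi> (of_int (det g) * 1) = act_ind ?n g (\<phi> 1)" using hom_sgnD(3)[OF phi g] .
  moreover have "\<phi> (of_int (det g) * 1) = scale2 (of_int (det g)) (\<phi> 1)" using hom_sgnD(2)[OF phi] .
  ultimately have "act_ind ?n g (\<phi> 1) x p = of_int (det g) * \<phi> 1 x p"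
    by (metis scale1_def scale2_def)
  hence "\<phi> 1 (x * g) p = of_int (det g) * \<phi> 1 x p" using x by (simp add: act_ind_def)
  moreover have "\<phi> 1 (k * x) = act_W (sum_list lam) ?n k (\<phi> 1 x)"
    using ind_repD(3)[OF hom_sgnD(1)[OF phi] k x] .
  ultimately show ?thesis using kx by simp
qed

lemma pi_id: "pi1 i id = id" "pi2 i n id = id"
  by (auto simp: fun_eq_iff pi1_def pi2_def)

lemma young_subI:
  assumes "k \<in> signed_perm_mats n" "\<And>j. j < i \<Longrightarrow> sp_perm k j < i"
  shows "k \<in> young_sub i n"
  using assms by (simp add: young_sub_def)

lemma flip_kill:
  assumes phi: "\<phi> \<in> hom_sgn P lam mu" and fl: "flipm (sum_list lam + sum_list mu) j \<in> P"
    and x: "x \<in> signed_perm_mats (sum_list lam + sum_list mu)" and j: "j < sum_list lam + sum_list mu"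
    and low: "sp_perm x j < sum_list lam"
  shows "\<phi> 1 x = 0"
proof -
  let ?n = "sum_list lam + sum_list mu" let ?i = "sum_list lam"
  let ?k = "flipm ?n (sp_perm x j)"
  have pj: "sp_perm x j < ?n" using B_facts(2)[OF x j] by simp
  have k: "?k \<in> young_sub ?i ?n" using flipm_B flipm_perm by (intro young_subI) auto
  have kx: "?k * x = x * flipm ?n j" by (rule flipm_conj[OF x j])
  have "\<phi> 1 x p = 0" for p
  proof -
    obtain r1 r2 where p: "p = (r1, r2)" by fastforce
    have "act_W ?i ?n ?k (\<phi> 1 x) p = of_int (det (flipm ?n j)) * \<phi> 1 x p"
      by (rule hom_eigen[OF phi fl x k kx])
    moreover have "act_W ?i ?n ?k (\<phi> 1 x) p = \<phi> 1 x p"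
      using p flipm_chi[OF pj, of ?i] low by (simp add: act_W_eq flipm_perm pi_id)
    ultimately show ?thesis using flipm_det[OF j] by simp
  qed
  thus ?thesis by (simp add: fun_eq_iff)
qed

lemma trans_low:
  assumes phi: "\<phi> \<in> hom_sgn P lam mu" and tr: "trm (sum_list lam + sum_list mu) a b \<in> P"
    and x: "x \<in> signed_perm_mats (sum_list lam + sum_list mu)"
    and a: "a < sum_list lam + sum_list mu" and b: "b < sum_list lam + sum_list mu" and ab: "a \<noteq> b"
    and la: "sp_perm x a < sum_list lam" and lb: "sp_perm x b < sum_list lam"
  shows "\<phi> 1 x (r1 \<circ> Transposition.transpose (sp_perm x a) (sp_perm x b), r2) = - \<phi> 1 x (r1, r2)"
proof -
  let ?n = "sum_list lam + sum_list mu" let ?i = "sum_list lam"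
  let ?pa = "sp_perm x a" let ?pb = "sp_perm x b" let ?c = "sp_sign x a * sp_sign x b"
  let ?k = "strm ?n ?pa ?pb ?c"
  have pa: "?pa < ?n" and pb: "?pb < ?n" using B_facts(2)[OF x a] B_facts(2)[OF x b] by auto
  have pab: "?pa \<noteq> ?pb" using B_perm[OF x] ab permutes_inj by (metis injD)
  have c: "?c \<in> {-1, 1}" using B_sign[OF x a] B_sign[OF x b] by auto
  note sf = strm_facts[OF pa pb c]
  have k: "?k \<in> young_sub ?i ?n"
  proof (rule young_subI[OF sf(1)])
    fix j assume "j < ?i" thus "sp_perm ?k j < ?i" using la lb sf(2) by (auto simp: transpose_def)
  qed
  have kx: "?k * x = x * trm ?n a b" by (rule strm_conj[OF x a b ab])
  have "act_W ?i ?n ?k (\<phi> 1 x) (r1, r2) = of_int (det (trm ?n a b)) * \<phi> 1 x (r1, r2)"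
    by (rule hom_eigen[OF phi tr x k kx])
  moreover have "act_W ?i ?n ?k (\<phi> 1 x) (r1, r2) = \<phi> 1 x (r1 \<circ> Transposition.transpose ?pa ?pb, r2)"
    using strm_chi[OF pa pb c pab, of ?i] la lb sf(2) pi_transpose_low(1)[OF la lb] pi_transpose_low(2)[OF la lb, of ?n]
    by (simp add: act_W_eq)
  ultimately show ?thesis using trm_det[OF a b ab] by simp
qed

lemma trans_high:
  assumes phi: "\<phi> \<in> hom_sgn P lam mu" and tr: "trm (sum_list lam + sum_list mu) a b \<in> P"
    and x: "x \<in> signed_perm_mats (sum_list lam + sum_list mu)"
    and a: "a < sum_list lam + sum_list mu" and b: "b < sum_list lam + sum_list mu" and ab: "a \<noteq> b"
    and la: "sum_list lam \<le> sp_perm x a" and lb: "sum_list lam \<le> sp_perm x b"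
  shows "\<phi> 1 x (r1, r2 \<circ> Transposition.transpose (sp_perm x a - sum_list lam) (sp_perm x b - sum_list lam)) = - \<phi> 1 x (r1, r2)"
proof -
  let ?n = "sum_list lam + sum_list mu" let ?i = "sum_list lam"
  let ?pa = "sp_perm x a" let ?pb = "sp_perm x b" let ?c = "sp_sign x a * sp_sign x b"
  let ?k = "strm ?n ?pa ?pb ?c"
  have pa: "?pa < ?n" and pb: "?pb < ?n" using B_facts(2)[OF x a] B_facts(2)[OF x b] by auto
  have pab: "?pa \<noteq> ?pb" using B_perm[OF x] ab permutes_inj by (metis injD)
  have c: "?c \<in> {-1, 1}" using B_sign[OF x a] B_sign[OF x b] by auto
  note sf = strm_facts[OF pa pb c]
  have k: "?k \<in> young_sub ?i ?n"
  proof (rule young_subI[OF sf(1)])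
    fix j assume "j < ?i" thus "sp_perm ?k j < ?i" using la lb sf(2) by (auto simp: transpose_def)
  qed
  have kx: "?k * x = x * trm ?n a b" by (rule strm_conj[OF x a b ab])
  have "act_W ?i ?n ?k (\<phi> 1 x) (r1, r2) = of_int (det (trm ?n a b)) * \<phi> 1 x (r1, r2)"
    by (rule hom_eigen[OF phi tr x k kx])
  moreover have "act_W ?i ?n ?k (\<phi> 1 x) (r1, r2) = \<phi> 1 x (r1, r2 \<circ> Transposition.transpose (?pa - ?i) (?pb - ?i))"
    using strm_chi[OF pa pb c pab, of ?i] la lb sf(2) pi_transpose_high[OF la lb pa pb]
    by (simp add: act_W_eq)
  ultimately show ?thesis using trm_det[OF a b ab] by simp
qed

lemma bs_le_sum: "bs ps c \<le> sum_list ps"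
proof (cases "c \<le> length ps")
  case True thus ?thesis using bs_mono[OF True, of ps] bs_len[of ps "length ps"] by simp
next
  case False thus ?thesis by (simp add: bs_len)
qed

lemma block_images:
  fixes p :: "nat \<Rightarrow> nat" and s M off :: nat
  assumes inj: "inj p" and offh: "\<And>j. off \<le> j \<Longrightarrow> j < off + sum_list \<gamma> \<Longrightarrow> s \<le> p j \<and> p j < s + M"
  defines "D \<equiv> \<lambda>c. (\<lambda>e. e - s) ` p ` {off + bs \<gamma> c..<off + bs \<gamma> (Suc c)}"
  shows "\<And>c. c < length \<gamma> \<Longrightarrow> D c \<subseteq> {0..<M}"
    and "\<And>c. c < length \<gamma> \<Longrightarrow> card (D c) = \<gamma> ! c"
    and "\<And>c c'. c < length \<gamma> \<Longrightarrow> c' < length \<gamma> \<Longrightarrow> c \<noteq> c' \<Longrightarrow> D c \<inter> D c' = {}"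
proof -
  let ?f = "\<lambda>e. p e - s"
  have Dc: "D c = ?f ` {off + bs \<gamma> c..<off + bs \<gamma> (Suc c)}" for c by (simp add: D_def image_image)
  have sub: "{off + bs \<gamma> c..<off + bs \<gamma> (Suc c)} \<subseteq> {off..<off + sum_list \<gamma>}" for c
    using bs_le_sum[of \<gamma> "Suc c"] by auto
  have finj: "inj_on ?f {off..<off + sum_list \<gamma>}"
  proof (rule inj_onI)
    fix x y assume xy: "x \<in> {off..<off + sum_list \<gamma>}" "y \<in> {off..<off + sum_list \<gamma>}" and eq: "p x - s = p y - s"
    have sx: "s \<le> p x" and sy: "s \<le> p y" using offh xy by auto
    have "p x = (p x - s) + s" using sx by simp
    also have "\<dots> = (p y - s) + s" using eq by simp
    also have "\<dots> = p y" using sy by simp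
    finally have "p x = p y" .
    thus "x = y" using inj by (simp add: inj_eq)
  qed
  show "D c \<subseteq> {0..<M}" if "c < length \<gamma>" for c
  proof
    fix e assume "e \<in> D c"
    then obtain j where j: "j \<in> {off + bs \<gamma> c..<off + bs \<gamma> (Suc c)}" "e = p j - s" using Dc by auto
    have jj: "off \<le> j" "j < off + sum_list \<gamma>" using subsetD[OF sub j(1)] by auto
    hence "s \<le> p j \<and> p j < s + M" by (rule offh)
    thus "e \<in> {0..<M}" using j by auto
  qed
  show "card (D c) = \<gamma> ! c" if "c < length \<gamma>" for c
  proof -
    have "card (D c) = card {off + bs \<gamma> c..<off + bs \<gamma> (Suc c)}"
      unfolding Dc by (rule card_image) (rule inj_on_subset[OF finj sub])
    thus ?thesis using bs_Suc[OF that] by simp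
  qed
  show "D c \<inter> D c' = {}" if "c < length \<gamma>" "c' < length \<gamma>" "c \<noteq> c'" for c c'
  proof (rule ccontr)
    assume "D c \<inter> D c' \<noteq> {}"
    then obtain j j' where j: "j \<in> {off + bs \<gamma> c..<off + bs \<gamma> (Suc c)}" "j' \<in> {off + bs \<gamma> c'..<off + bs \<gamma> (Suc c')}" "?f j = ?f j'"
      unfolding Dc by blast
    have "j = j'" by (rule inj_onD[OF finj j(3) subsetD[OF sub j(1)] subsetD[OF sub j(2)]])
    hence "bs \<gamma> c \<le> j - off" "j - off < bs \<gamma> (Suc c)" "bs \<gamma> c' \<le> j - off" "j - off < bs \<gamma> (Suc c')" using j by auto
    hence "c = c'" by (rule block_unique)
    thus False using that(3) by simp
  qed
qed

lemma preserve_low: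
  fixes p :: "nat \<Rightarrow> nat"
  assumes p: "p permutes {0..<n}" and hi: "\<And>j. i \<le> j \<Longrightarrow> j < n \<Longrightarrow> i \<le> p j" and j: "j < i" and i: "i \<le> n"
  shows "p j < i"
proof (rule ccontr)
  assume "\<not> p j < i"
  have inj: "inj p" using p permutes_inj by blast
  have img: "p ` {i..<n} \<subseteq> {i..<n}"
  proof
    fix y assume "y \<in> p ` {i..<n}"
    then obtain x where x: "x \<in> {i..<n}" "y = p x" by blast
    have "p x < n" using permutes_in_image[OF p, of x] x(1) by auto
    thus "y \<in> {i..<n}" using hi[of x] x by simp
  qed
  hence eq: "p ` {i..<n} = {i..<n}" using inj_on_subset[OF inj subset_UNIV] by (simp add: endo_inj_surj)
  have "p j < n" using permutes_in_image[OF p, of j] j i by auto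
  hence "p j \<in> p ` {i..<n}" using eq \<open>\<not> p j < i\<close> by simp
  then obtain j' where "j' \<in> {i..<n}" "p j = p j'" by blast
  hence "j = j'" using inj by (simp add: inj_eq)
  thus False using \<open>j' \<in> {i..<n}\<close> j by simp
qed

lemma trm_P:
  assumes a: "a < sum_list (al @ be)" and b: "b < sum_list (al @ be)" and bl: "blk (al @ be) a = blk (al @ be) b"
  shows "trm (sum_list (al @ be)) a b \<in> gen_parabolic al be"
proof (rule P_intro)
  show "trm (sum_list (al @ be)) a b \<in> signed_perm_mats (sum_list (al @ be))" by (rule trm_B[OF a b])
  show "blk (al @ be) (sp_perm (trm (sum_list (al @ be)) a b) j) = blk (al @ be) j" for j
    unfolding trm_perm[OF a b] using bl by (simp add: transpose_def)
  show "sp_sign (trm (sum_list (al @ be)) a b) j = 1" if "j < sum_list al" for j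
    using trm_sign[OF a b] that by simp
qed

lemma flipm_P:
  assumes j: "sum_list al \<le> j"
  shows "flipm (sum_list (al @ be)) j \<in> gen_parabolic al be"
proof (rule P_intro)
  show "flipm (sum_list (al @ be)) j \<in> signed_perm_mats (sum_list (al @ be))" by (rule flipm_B)
  show "blk (al @ be) (sp_perm (flipm (sum_list (al @ be)) j) l) = blk (al @ be) l" for l
    by (simp add: flipm_perm)
  show "sp_sign (flipm (sum_list (al @ be)) j) l = 1" if "l < sum_list al" for l
    using flipm_sign[of l] that j by simp
qed


lemma comp_transpose_same: "f a = f b \<Longrightarrow> f \<circ> Transposition.transpose a b = f"
  by (auto simp: fun_eq_iff transpose_def)

lemma vs3: "Vector_Spaces.vector_space (scale3 :: complex \<Rightarrow> ('a \<Rightarrow> 'b \<Rightarrow> 'c \<Rightarrow> complex) \<Rightarrow> _)"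
  by unfold_locales (auto simp: scale3_def scale2_def scale1_def fun_eq_iff algebra_simps)

lemma ms3: "Modules.module (scale3 :: complex \<Rightarrow> ('a \<Rightarrow> 'b \<Rightarrow> 'c \<Rightarrow> complex) \<Rightarrow> _)"
  using module_iff_vector_space vs3 by blast

lemma dim3_zero:
  fixes V :: "('a \<Rightarrow> 'b \<Rightarrow> 'c \<Rightarrow> complex) set"
  assumes "V \<subseteq> {0}"
  shows "Vector_Spaces.vector_space.dim scale3 V = 0"
proof -
  have sp: "Modules.module.span scale3 V = Modules.module.span scale3 {}"
  proof -
    have "Modules.module.span scale3 V \<subseteq> Modules.module.span scale3 {0::'a \<Rightarrow> 'b \<Rightarrow> 'c \<Rightarrow> complex}"
      using assms by (rule Modules.module.span_mono[OF ms3])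
    also have "\<dots> = Modules.module.span scale3 {}"
      using vector_space.span_insert_0[OF vs3, of "{}"] by simp
    finally have "Modules.module.span scale3 V \<subseteq> Modules.module.span scale3 {}" .
    moreover have "Modules.module.span scale3 {} \<subseteq> Modules.module.span scale3 V"
      by (rule Modules.module.span_mono[OF ms3]) simp
    ultimately show ?thesis by blast
  qed
  have "Vector_Spaces.vector_space.dim scale3 V = card ({} :: ('a \<Rightarrow> 'b \<Rightarrow> 'c \<Rightarrow> complex) set)"
    by (rule vector_space.dim_eq_card[OF vs3]) (use sp Modules.module.independent_empty[OF ms3] in auto)
  thus ?thesis by simp
qed

lemma dim3_one:
  fixes V :: "('a \<Rightarrow> 'b \<Rightarrow> 'c \<Rightarrow> complex) set"
  assumes v: "v \<in> V" "v \<noteq> 0" and sub: "V \<subseteq> Modules.module.span scale3 {v}"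
  shows "Vector_Spaces.vector_space.dim scale3 V = 1"
proof -
  note M = ms3
  have sp: "Modules.module.span scale3 {v} = Modules.module.span scale3 V"
  proof
    show "Modules.module.span scale3 {v} \<subseteq> Modules.module.span scale3 V"
      by (rule Modules.module.span_mono[OF M]) (use v in auto)
    show "Modules.module.span scale3 V \<subseteq> Modules.module.span scale3 {v}"
      using Modules.module.span_minimal[OF M sub Modules.module.subspace_span[OF M]] .
  qed
  have ind: "\<not> Modules.module.dependent scale3 {v}"
    using vector_space.dependent_single[OF vs3, of v] v(2) by simp
  have "Vector_Spaces.vector_space.dim scale3 V = card {v}"
    by (rule vector_space.dim_eq_card[OF vs3 sp ind])
  thus ?thesis by simp
qed

theorem vanish:
  fixes lam mu nu sigma :: "nat list"
  assumes pl: "is_partition lam" and pm: "is_partition mu" and pn: "is_partition nu" and ps: "is_partition sigma"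
    and sums: "sum_list lam + sum_list mu = sum_list nu + sum_list sigma"
    and succ: "pair_succ (nu, sigma) (lam, mu)"
  shows "mult_sgn (gen_parabolic (conj_part nu) (conj_part sigma)) lam mu = 0"
proof -
  define \<alpha> where "\<alpha> = conj_part nu"
  define \<beta> where "\<beta> = conj_part sigma"
  let ?P = "gen_parabolic \<alpha> \<beta>"
  let ?n = "sum_list lam + sum_list mu"
  let ?i = "sum_list lam"
  have sa: "sum_list \<alpha> = sum_list nu" and sb: "sum_list \<beta> = sum_list sigma"
    unfolding \<alpha>_def \<beta>_def by (simp_all add: conj_sum)
  have nps: "sum_list (\<alpha> @ \<beta>) = ?n" using sa sb sums by simp
  have zero: "\<phi> = 0" if phi: "\<phi> \<in> hom_sgn ?P lam mu" for \<phi>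
  proof -
    have F0: "\<phi> 1 x = 0" for x
    proof (rule ccontr)
      assume nz: "\<phi> 1 x \<noteq> 0"
      have x: "x \<in> signed_perm_mats ?n"
        using nz ind_repD(1)[OF hom_sgnD(1)[OF phi]] by blast
      obtain r1 r2 where nzp: "\<phi> 1 x (r1, r2) \<noteq> 0" using nz by (metis ext prod.collapse zero_fun_def)
      have W: "\<phi> 1 x \<in> tensor_specht lam mu" using ind_repD(2)[OF hom_sgnD(1)[OF phi] x] .
      have rc: "rowcounts lam r1" "rowcounts mu r2" using tensor_support[OF W nzp] by auto
      have pxp: "sp_perm x permutes {0..<?n}" by (rule B_perm[OF x])
      have inj: "inj (sp_perm x)" using pxp permutes_inj by blast
      have pxn: "sp_perm x j < ?n" if "j < ?n" for j using B_facts(2)[OF x that] by simp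
      have hi: "?i \<le> sp_perm x j" if j: "sum_list \<alpha> \<le> j" "j < ?n" for j
      proof (rule ccontr)
        assume "\<not> ?i \<le> sp_perm x j"
        hence "sp_perm x j < ?i" by simp
        moreover have "flipm ?n j \<in> ?P" using flipm_P[OF j(1), of \<beta>] nps by simp
        ultimately have "\<phi> 1 x = 0" using flip_kill[OF phi _ x j(2)] by blast
        thus False using nz by simp
      qed
      have trP: "trm ?n a b \<in> ?P" if "a < ?n" "b < ?n" "blk (\<alpha> @ \<beta>) a = blk (\<alpha> @ \<beta>) b" for a b
        using trm_P[of a \<alpha> \<beta> b] that nps by simp
      from succ consider (A) "lex_gt \<beta> (conj_part mu)" | (B) "mu = sigma" "lex_gt \<alpha> (conj_part lam)"
        unfolding pair_succ_def \<alpha>_def \<beta>_def by auto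
      then show False
      proof cases
        case A
        define D where "D c = (\<lambda>e. e - ?i) ` sp_perm x ` {sum_list \<alpha> + bs \<beta> c..<sum_list \<alpha> + bs \<beta> (Suc c)}" for c
        have offh: "?i \<le> sp_perm x j \<and> sp_perm x j < ?i + sum_list mu"
          if "sum_list \<alpha> \<le> j" "j < sum_list \<alpha> + sum_list \<beta>" for j
          using hi[of j] pxn[of j] that nps by simp
        note BI = block_images[where p="sp_perm x" and off="sum_list \<alpha>" and \<gamma>=\<beta> and s="?i" and M="sum_list mu", OF inj offh, folded D_def]
        have Dinj: "inj_on r2 (D c)" if c: "c < length \<beta>" for c
        proof (rule inj_onI, rule ccontr)
          fix e1 e2 assume e: "e1 \<in> D c" "e2 \<in> D c" "r2 e1 = r2 e2" "e1 \<noteq> e2"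
          obtain j1 where j1: "j1 \<in> {sum_list \<alpha> + bs \<beta> c..<sum_list \<alpha> + bs \<beta> (Suc c)}" "e1 = sp_perm x j1 - ?i"
            using e(1) by (auto simp: D_def)
          obtain j2 where j2: "j2 \<in> {sum_list \<alpha> + bs \<beta> c..<sum_list \<alpha> + bs \<beta> (Suc c)}" "e2 = sp_perm x j2 - ?i"
            using e(2) by (auto simp: D_def)
          have j12: "j1 \<noteq> j2" using e(4) j1 j2 by auto
          have lt: "j1 < ?n" "j2 < ?n" using j1 j2 bs_le_sum[of \<beta> "Suc c"] nps by auto
          have bb: "blk \<beta> (j1 - sum_list \<alpha>) = c" "blk \<beta> (j2 - sum_list \<alpha>) = c"
            using j1 j2 c by (auto intro!: blk_eq)
          have "blk (\<alpha> @ \<beta>) j1 = length \<alpha> + c" "blk (\<alpha> @ \<beta>) j2 = length \<alpha> + c"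
            using blk_append_right[of \<alpha> j1 \<beta>] blk_append_right[of \<alpha> j2 \<beta>] j1 j2 lt bb nps by auto
          hence tP: "trm ?n j1 j2 \<in> ?P" using trP lt by simp
          have h1: "?i \<le> sp_perm x j1" "?i \<le> sp_perm x j2" using hi j1 j2 lt by auto
          have "\<phi> 1 x (r1, r2 \<circ> Transposition.transpose e1 e2) = - \<phi> 1 x (r1, r2)"
            using trans_high[OF phi tP x lt j12 h1, of r1 r2] j1(2) j2(2) by simp
          moreover have "r2 \<circ> Transposition.transpose e1 e2 = r2" by (rule comp_transpose_same[of _ e1 e2, OF e(3)])
          ultimately show False using nzp by simp
        qed
        interpret B: blocks mu r2 \<beta> D
          by unfold_locales (use pm rc BI Dinj in auto)
        have "\<not> lex_gt \<beta> (conj_part mu)" using B.not_lex_gt conj_pos unfolding \<beta>_def by blast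
        thus False using A by simp
      next
        case B
        have ia: "sum_list \<alpha> = ?i" using sa sums B(1) by simp
        have low: "sp_perm x j < ?i" if "j < ?i" for j
          by (rule preserve_low[OF pxp _ that]) (use hi ia in auto)
        define D where "D c = (\<lambda>e. e - 0) ` sp_perm x ` {0 + bs \<alpha> c..<0 + bs \<alpha> (Suc c)}" for c
        have offh: "0 \<le> sp_perm x j \<and> sp_perm x j < 0 + ?i" if "0 \<le> j" "j < 0 + sum_list \<alpha>" for j
          using low[of j] that ia by simp
        note BI = block_images[where p="sp_perm x" and off=0 and \<gamma>=\<alpha> and s=0 and M="?i", OF inj offh, folded D_def]
        have Dinj: "inj_on r1 (D c)" if c: "c < length \<alpha>" for c
        proof (rule inj_onI, rule ccontr)
          fix e1 e2 assume e: "e1 \<in> D c" "e2 \<in> D c" "r1 e1 = r1 e2" "e1 \<noteq> e2"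
          obtain j1 where j1: "j1 \<in> {bs \<alpha> c..<bs \<alpha> (Suc c)}" "e1 = sp_perm x j1"
            using e(1) by (auto simp: D_def)
          obtain j2 where j2: "j2 \<in> {bs \<alpha> c..<bs \<alpha> (Suc c)}" "e2 = sp_perm x j2"
            using e(2) by (auto simp: D_def)
          have j12: "j1 \<noteq> j2" using e(4) j1 j2 by auto
          have lta: "j1 < sum_list \<alpha>" "j2 < sum_list \<alpha>" using j1 j2 bs_le_sum[of \<alpha> "Suc c"] by auto
          have lt: "j1 < ?n" "j2 < ?n" using lta nps by auto
          have "blk (\<alpha> @ \<beta>) j1 = c" "blk (\<alpha> @ \<beta>) j2 = c"
            using blk_append_left[OF lta(1)] blk_append_left[OF lta(2)] j1 j2 c by (auto intro!: blk_eq)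
          hence tP: "trm ?n j1 j2 \<in> ?P" using trP lt by simp
          have l1: "sp_perm x j1 < ?i" "sp_perm x j2 < ?i" using low lta ia by auto
          have "\<phi> 1 x (r1 \<circ> Transposition.transpose e1 e2, r2) = - \<phi> 1 x (r1, r2)"
            using trans_low[OF phi tP x lt j12 l1, of r1 r2] j1(2) j2(2) by simp
          moreover have "r1 \<circ> Transposition.transpose e1 e2 = r1" by (rule comp_transpose_same[of _ e1 e2, OF e(3)])
          ultimately show False using nzp by simp
        qed
        interpret B: blocks lam r1 \<alpha> D
          by unfold_locales (use pl rc BI Dinj ia in auto)
        have "\<not> lex_gt \<alpha> (conj_part lam)" using B.not_lex_gt conj_pos unfolding \<alpha>_def by blast
        thus False using B by simp
      qed
    qed
    show "\<phi> = 0"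
    proof
      fix c show "\<phi> c = 0 c" using hom_scale[OF phi, of c] F0 by (simp add: scale2_def scale1_def fun_eq_iff)
    qed
  qed
  have "hom_sgn ?P lam mu \<subseteq> {0}" using zero by blast
  thus ?thesis unfolding mult_sgn_def \<alpha>_def \<beta>_def by (rule dim3_zero)
qed

lemma H_facts:
  assumes h: "h \<in> young_sub i n" and i: "i \<le> n"
  shows "h \<in> signed_perm_mats n"
    and "\<And>e. e < i \<Longrightarrow> sp_perm h e < i"
    and "\<And>e. i \<le> e \<Longrightarrow> e < n \<Longrightarrow> i \<le> sp_perm h e \<and> sp_perm h e < n"
    and "pi1 i (sp_perm h) permutes {0..<i}" "pi2 i n (sp_perm h) permutes {0..<n - i}"
    and "comb i n (pi1 i (sp_perm h)) (pi2 i n (sp_perm h)) = sp_perm h"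
proof -
  show hB: "h \<in> signed_perm_mats n" using h by (simp add: young_sub_def)
  show low: "\<And>e. e < i \<Longrightarrow> sp_perm h e < i" using h by (simp add: young_sub_def)
  have p: "sp_perm h permutes {0..<n}" by (rule B_perm[OF hB])
  note D = pi_decomp[OF p i low]
  show "pi1 i (sp_perm h) permutes {0..<i}" "pi2 i n (sp_perm h) permutes {0..<n - i}"
    "comb i n (pi1 i (sp_perm h)) (pi2 i n (sp_perm h)) = sp_perm h" using D by auto
  show "i \<le> sp_perm h e \<and> sp_perm h e < n" if "i \<le> e" "e < n" for e
  proof -
    have "sp_perm h e = comb i n (pi1 i (sp_perm h)) (pi2 i n (sp_perm h)) e" using D(3) by simp
    also have "\<dots> = pi2 i n (sp_perm h) (e - i) + i" using that by (simp add: comb_def)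
    finally have eq: "sp_perm h e = pi2 i n (sp_perm h) (e - i) + i" .
    have "pi2 i n (sp_perm h) (e - i) < n - i" using permutes_in_image[OF D(2), of "e - i"] that by auto
    thus ?thesis using eq that by simp
  qed
qed

lemma H_mult:
  assumes h: "h \<in> young_sub i n" and g: "g \<in> young_sub i n" and i: "i \<le> n"
  shows "h * g \<in> young_sub i n"
proof -
  note Fh = H_facts[OF h i] and Fg = H_facts[OF g i]
  show ?thesis
    using B_mult[OF Fh(1) Fg(1)] Fh(2) Fg(2) by (intro young_subI) auto
qed

lemma H_mult_rev:
  assumes x: "x \<in> signed_perm_mats n" and g: "g \<in> young_sub i n" and xg: "x * g \<in> young_sub i n" and i: "i \<le> n"
  shows "x \<in> young_sub i n"
proof (rule young_subI[OF x])
  fix e assume e: "e < i"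
  note Fg = H_facts[OF g i]
  have p1: "pi1 i (sp_perm g) permutes {0..<i}" by (rule Fg(4))
  have "e \<in> pi1 i (sp_perm g) ` {0..<i}" using permutes_image[OF p1] e by simp
  then obtain e' where e': "e' \<in> {0..<i}" "pi1 i (sp_perm g) e' = e" by blast
  have e'i: "e' < i" using e' by simp
  have "sp_perm g e' = e" using e' by (simp add: pi1_def)
  moreover have "sp_perm (x * g) e' < i" using xg e'i by (simp add: young_sub_def)
  ultimately show "sp_perm x e < i" using B_mult(2)[OF x Fg(1)] by simp
qed

lemma chi_mult:
  assumes h: "h \<in> young_sub i n" and g: "g \<in> young_sub i n" and i: "i \<le> n"
  shows "chi i (h * g) = chi i h * chi i g"
proof -
  note Fh = H_facts[OF h i] and Fg = H_facts[OF g i]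
  have dh: "dim_col h = n" "dim_col g = n" "dim_col (h * g) = n"
    using B_facts(1)[OF Fh(1)] B_facts(1)[OF Fg(1)] by auto
  have "chi i (h * g) = (\<Prod>j\<in>{i..<n}. sp_sign h (sp_perm g j) * sp_sign g j)"
    unfolding chi_def dh using B_mult(3)[OF Fh(1) Fg(1)] by (intro prod.cong) auto
  also have "\<dots> = (\<Prod>j\<in>{i..<n}. sp_sign h (sp_perm g j)) * chi i g"
    unfolding chi_def dh by (rule prod.distrib)
  also have "(\<Prod>j\<in>{i..<n}. sp_sign h (sp_perm g j)) = (\<Prod>j\<in>{i..<n}. sp_sign h j)"
  proof -
    have inj: "inj_on (sp_perm g) {i..<n}" using B_perm[OF Fg(1)] permutes_inj inj_on_subset by blast
    have img: "sp_perm g ` {i..<n} = {i..<n}"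
    proof -
      have "sp_perm g ` {i..<n} \<subseteq> {i..<n}" using Fg(3) by auto
      thus ?thesis using inj by (simp add: endo_inj_surj)
    qed
    show ?thesis using prod.reindex[OF inj, of "sp_sign h"] img by (simp add: comp_def)
  qed
  finally show ?thesis unfolding chi_def dh by simp
qed

lemma act_W_mult:
  assumes h: "h \<in> young_sub i n" and g: "g \<in> young_sub i n" and i: "i \<le> n"
  shows "act_W i n (h * g) w = act_W i n h (act_W i n g w)"
proof -
  note Fh = H_facts[OF h i] and Fg = H_facts[OF g i]
  have pm: "sp_perm (h * g) = sp_perm h \<circ> sp_perm g" using B_mult(2)[OF Fh(1) Fg(1)] .
  have p1: "pi1 i (sp_perm h \<circ> sp_perm g) = pi1 i (sp_perm h) \<circ> pi1 i (sp_perm g)"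
    using Fg(2) by (auto simp: fun_eq_iff pi1_def)
  have p2: "pi2 i n (sp_perm h \<circ> sp_perm g) = pi2 i n (sp_perm h) \<circ> pi2 i n (sp_perm g)"
  proof
    fix e show "pi2 i n (sp_perm h \<circ> sp_perm g) e = (pi2 i n (sp_perm h) \<circ> pi2 i n (sp_perm g)) e"
    proof (cases "e < n - i")
      case True
      have "i \<le> sp_perm g (e + i)" "sp_perm g (e + i) < n" using Fg(3)[of "e + i"] True by auto
      thus ?thesis using True by (simp add: pi2_def)
    qed (simp add: pi2_def)
  qed
  show ?thesis
  proof
    fix p :: "(nat \<Rightarrow> nat) \<times> (nat \<Rightarrow> nat)"
    obtain r1 r2 where p: "p = (r1, r2)" by fastforce
    show "act_W i n (h * g) w p = act_W i n h (act_W i n g w) p"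
      unfolding p act_W_eq pm p1 p2 chi_mult[OF h g i] by (simp add: o_assoc)
  qed
qed

lemma act_W_scale: "act_W i n h (scale1 c w) = scale1 c (act_W i n h w)"
  by (auto simp: fun_eq_iff act_W_def scale1_def)

lemma act_W_zero: "act_W i n h 0 = 0"
  by (auto simp: fun_eq_iff act_W_def)

lemma P_sub_H:
  assumes g: "g \<in> gen_parabolic a b"
  shows "g \<in> young_sub (sum_list a) (sum_list a + sum_list b)"
proof (rule young_subI)
  show "g \<in> signed_perm_mats (sum_list a + sum_list b)" using P_B[OF g] by simp
  fix e assume e: "e < sum_list a"
  have en: "e < sum_list (a @ b)" using e by simp
  have pe: "sp_perm g e < sum_list (a @ b)" using B_facts(2)[OF P_B[OF g] en] by simp
  have "blk (a @ b) (sp_perm g e) = blk a e" using P_elim(1)[OF g en] blk_append_left[OF e] by simp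
  moreover have "blk a e < length a" using blk[OF e] by simp
  ultimately show "sp_perm g e < sum_list a"
  proof -
    assume b1: "blk (a @ b) (sp_perm g e) = blk a e" and b2: "blk a e < length a"
    show ?thesis
    proof (rule ccontr)
      assume "\<not> sp_perm g e < sum_list a"
      hence "blk (a @ b) (sp_perm g e) = length a + blk b (sp_perm g e - sum_list a)"
        using pe by (intro blk_append_right) auto
      thus False using b1 b2 by simp
    qed
  qed
qed


lemma blk_T0:
  assumes lam: "is_partition lam" and e: "e < sum_list lam"
  shows "snd (Tinv lam (T0 lam) e) = blk (conj_part lam) e"
  using Tinv_T0[OF lam e] by simp

lemma colstab_blk:
  assumes lam: "is_partition lam" and p: "\<pi> \<in> col_stab lam (T0 lam)" and e: "e < sum_list lam"
  shows "blk (conj_part lam) (\<pi> e) = blk (conj_part lam) e"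
proof -
  have pe: "\<pi> e < sum_list lam" using permutes_in_image[OF colstab_permutes[OF T0_tableau[OF lam] p], of e] e by simp
  have "snd (Tinv lam (T0 lam) (\<pi> e)) = snd (Tinv lam (T0 lam) e)"
    using p e colstab_iff[OF T0_tableau[OF lam]] by blast
  thus ?thesis using blk_T0[OF lam e] blk_T0[OF lam pe] by simp
qed

locale eqcase =
  fixes lam mu :: "nat list"
  assumes pl: "is_partition lam" and pm: "is_partition mu"
begin

abbreviation "ni \<equiv> sum_list lam"
abbreviation "m2 \<equiv> sum_list mu"
abbreviation "nn \<equiv> sum_list lam + sum_list mu"
abbreviation "al \<equiv> conj_part lam"
abbreviation "be \<equiv> conj_part mu"
abbreviation "PP \<equiv> gen_parabolic (conj_part lam) (conj_part mu)"
abbreviation "HH \<equiv> young_sub (sum_list lam) (sum_list lam + sum_list mu)"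

lemma sa: "sum_list al = ni" and sb: "sum_list be = m2" and nps: "sum_list (al @ be) = nn"
  by (simp_all add: conj_sum)

lemma P_H: "g \<in> PP \<Longrightarrow> g \<in> HH"
  using P_sub_H[of g al be] sa sb by simp

lemma P_Bn: "g \<in> PP \<Longrightarrow> g \<in> signed_perm_mats nn"
  using P_B[of g al be] nps by simp

lemma Pdecomp:
  assumes g: "g \<in> PP"
  shows "pi1 ni (sp_perm g) \<in> col_stab lam (T0 lam)"
    and "pi2 ni nn (sp_perm g) \<in> col_stab mu (T0 mu)"
    and "det g = sign (pi1 ni (sp_perm g)) * sign (pi2 ni nn (sp_perm g)) * chi ni g"
proof -
  have gH: "g \<in> HH" by (rule P_H[OF g])
  have gB: "g \<in> signed_perm_mats nn" by (rule P_Bn[OF g])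
  note F = H_facts[OF gH, simplified]
  have ge: "blk (al @ be) (sp_perm g j) = blk (al @ be) j" if "j < nn" for j
    using P_elim(1)[OF g] that nps by simp
  show "pi1 ni (sp_perm g) \<in> col_stab lam (T0 lam)"
  proof (rule colstab_T0I[OF pl])
    show "pi1 ni (sp_perm g) permutes {0..<ni}" using F(4) .
    fix c e assume c: "c < length al" "bs al c \<le> e" "e < bs al (Suc c)"
    have e: "e < ni" using c(3) bs_le_sum[of al "Suc c"] sa by simp
    have pe: "sp_perm g e < ni" using F(2)[OF e] .
    have "blk al (sp_perm g e) = blk al e"
      using ge[of e] e blk_append_left[of e al be] blk_append_left[of "sp_perm g e" al be] pe sa by simp
    also have "blk al e = c" using c by (intro blk_eq) auto
    finally have "blk al (sp_perm g e) = c" .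
    thus "bs al c \<le> pi1 ni (sp_perm g) e \<and> pi1 ni (sp_perm g) e < bs al (Suc c)"
      using blk[of "sp_perm g e" al] pe sa e by (simp add: pi1_def)
  qed
  show "pi2 ni nn (sp_perm g) \<in> col_stab mu (T0 mu)"
  proof (rule colstab_T0I[OF pm])
    show "pi2 ni nn (sp_perm g) permutes {0..<m2}" using F(5) by simp
    fix c e assume c: "c < length be" "bs be c \<le> e" "e < bs be (Suc c)"
    have e: "e < m2" using c(3) bs_le_sum[of be "Suc c"] sb by simp
    have r: "ni \<le> sp_perm g (e + ni) \<and> sp_perm g (e + ni) < nn" using F(3)[of "e + ni"] e by simp
    have b1: "blk (al @ be) (e + ni) = length al + blk be e"
      using blk_append_right[of al "e + ni" be] e sa sb by simp
    have b2: "blk (al @ be) (sp_perm g (e + ni)) = length al + blk be (sp_perm g (e + ni) - ni)"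
      using blk_append_right[of al "sp_perm g (e + ni)" be] r sa sb by simp
    have "blk be (sp_perm g (e + ni) - ni) = blk be e" using ge[of "e + ni"] e b1 b2 by simp
    also have "blk be e = c" using c by (intro blk_eq) auto
    finally have bc: "blk be (sp_perm g (e + ni) - ni) = c" .
    have "sp_perm g (e + ni) - ni < sum_list be" using r sb by arith
    thus "bs be c \<le> pi2 ni nn (sp_perm g) e \<and> pi2 ni nn (sp_perm g) e < bs be (Suc c)"
      using blk[of "sp_perm g (e + ni) - ni" be] bc e by (simp add: pi2_def)
  qed
  have "det g = sign (sp_perm g) * (\<Prod>j<nn. sp_sign g j)" by (rule det_B[OF gB])
  also have "sign (sp_perm g) = sign (pi1 ni (sp_perm g)) * sign (pi2 ni nn (sp_perm g))"
    using comb_perm(2)[OF H_facts(4,5)[OF gH le_add1] le_add1] F(6) by simp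
  also have "(\<Prod>j<nn. sp_sign g j) = chi ni g"
  proof -
    have "(\<Prod>j<nn. sp_sign g j) = (\<Prod>j\<in>{0..<ni}. sp_sign g j) * (\<Prod>j\<in>{ni..<nn}. sp_sign g j)"
      by (simp add: atLeast0LessThan[symmetric] prod.atLeastLessThan_concat)
    also have "(\<Prod>j\<in>{0..<ni}. sp_sign g j) = 1"
      using P_elim(2)[OF g] sa nps by (intro prod.neutral) auto
    finally show ?thesis using B_facts(1)[OF gB] by (simp add: chi_def)
  qed
  finally show "det g = sign (pi1 ni (sp_perm g)) * sign (pi2 ni nn (sp_perm g)) * chi ni g" .
qed

end


context eqcase begin

lemma Pbuild:
  assumes p1: "\<pi>1 \<in> col_stab lam (T0 lam)" and p2: "\<pi>2 \<in> col_stab mu (T0 mu)"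
  defines "g \<equiv> spm nn (comb ni nn \<pi>1 \<pi>2) (\<lambda>_. 1)"
  shows "g \<in> PP" "pi1 ni (sp_perm g) = \<pi>1" "pi2 ni nn (sp_perm g) = \<pi>2"
    "det g = sign \<pi>1 * sign \<pi>2" "chi ni g = 1"
proof -
  have q1: "\<pi>1 permutes {0..<ni}" using colstab_permutes[OF T0_tableau[OF pl] p1] .
  have q2: "\<pi>2 permutes {0..<nn - ni}" using colstab_permutes[OF T0_tableau[OF pm] p2] by simp
  note C = comb_perm[OF q1 q2 le_add1]
  have gB: "g \<in> signed_perm_mats nn" unfolding g_def by (rule spm_in[OF C(1)]) auto
  have pg: "sp_perm g = comb ni nn \<pi>1 \<pi>2" unfolding g_def by (rule spm_sp_perm[OF C(1)]) auto
  have sg: "sp_sign g j = 1" if "j < nn" for j unfolding g_def by (rule spm_sp_sign[OF C(1) _ that]) auto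
  show "g \<in> PP"
  proof (rule P_intro)
    show "g \<in> signed_perm_mats (sum_list (al @ be))" using gB nps by simp
    show "sp_sign g j = 1" if "j < sum_list al" for j using sg[of j] that sa by simp
    fix j assume j: "j < sum_list (al @ be)"
    show "blk (al @ be) (sp_perm g j) = blk (al @ be) j"
    proof (cases "j < ni")
      case True
      have pj: "\<pi>1 j < ni" using permutes_in_image[OF q1, of j] True by simp
      have "blk al (\<pi>1 j) = blk al j" using colstab_blk[OF pl p1 True] .
      thus ?thesis using True pj pg blk_append_left[of j al be] blk_append_left[of "\<pi>1 j" al be] sa
        by (simp add: comb_def)
    next
      case False
      have jn: "j < nn" using j nps by simp
      have e: "j - ni < m2" using jn False by arith
      have pe: "\<pi>2 (j - ni) < m2" using permutes_in_image[OF q2, of "j - ni"] e by simp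
      have "blk be (\<pi>2 (j - ni)) = blk be (j - ni)" using colstab_blk[OF pm p2 e] .
      moreover have "blk (al @ be) j = length al + blk be (j - ni)"
        using blk_append_right[of al j be] False jn sa sb by simp
      moreover have "blk (al @ be) (\<pi>2 (j - ni) + ni) = length al + blk be (\<pi>2 (j - ni))"
        using blk_append_right[of al "\<pi>2 (j - ni) + ni" be] pe sa sb by simp
      ultimately show ?thesis using pg False jn by (simp add: comb_def)
    qed
  qed
  show "pi1 ni (sp_perm g) = \<pi>1" "pi2 ni nn (sp_perm g) = \<pi>2" using comb_pi[OF q1 q2 le_add1] pg by auto
  show "det g = sign \<pi>1 * sign \<pi>2" unfolding g_def using det_spm[OF C(1)] C(2) by simp
  show "chi ni g = 1" unfolding chi_def using sg B_facts(1)[OF gB] by (intro prod.neutral) auto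
qed

definition "e1 = polytabloid lam (T0 lam)"
definition "e2 = polytabloid mu (T0 mu)"
definition "v0 = (\<lambda>(r1, r2). e1 r1 * e2 r2)"
definition "F0 x = (if x \<in> HH then act_W ni nn x v0 else 0)"
definition "phi0 c = scale2 c F0"

lemma v0_eigen:
  assumes g: "g \<in> PP"
  shows "act_W ni nn g v0 p = of_int (det g) * v0 p"
proof -
  obtain r1 r2 where p: "p = (r1, r2)" by fastforce
  note D = Pdecomp[OF g]
  have "act_W ni nn g v0 p = of_int (chi ni g) * (e1 (r1 \<circ> pi1 ni (sp_perm g)) * e2 (r2 \<circ> pi2 ni nn (sp_perm g)))"
    by (simp add: p act_W_eq v0_def)
  also have "e1 (r1 \<circ> pi1 ni (sp_perm g)) = of_int (sign (pi1 ni (sp_perm g))) * e1 r1"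
    unfolding e1_def by (rule polytabloid_colstab[OF T0_tableau[OF pl] D(1)])
  also have "e2 (r2 \<circ> pi2 ni nn (sp_perm g)) = of_int (sign (pi2 ni nn (sp_perm g))) * e2 r2"
    unfolding e2_def by (rule polytabloid_colstab[OF T0_tableau[OF pm] D(2)])
  finally show ?thesis using D(3) by (simp add: p v0_def algebra_simps)
qed

lemma v0_in_W:
  assumes h: "h \<in> HH"
  shows "act_W ni nn h v0 \<in> tensor_specht lam mu"
proof -
  note F = H_facts[OF h le_add1]
  have q1: "pi1 ni (sp_perm h) permutes {0..<ni}" using F(4) .
  have q2: "pi2 ni nn (sp_perm h) permutes {0..<m2}" using F(5) by simp
  define f where "f = polytabloid lam (pi1 ni (sp_perm h) \<circ> T0 lam)"
  define g where "g = polytabloid mu (pi2 ni nn (sp_perm h) \<circ> T0 mu)"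
  have f: "f \<in> specht lam" unfolding f_def specht_def
    by (rule span_base1) (use comp_tableau[OF T0_tableau[OF pl] q1] in blast)
  have g: "g \<in> specht mu" unfolding g_def specht_def
    by (rule span_base1) (use comp_tableau[OF T0_tableau[OF pm] q2] in blast)
  have eq: "act_W ni nn h v0 = scale1 (of_int (chi ni h)) (\<lambda>(r1, r2). f r1 * g r2)"
  proof
    fix p :: "(nat \<Rightarrow> nat) \<times> (nat \<Rightarrow> nat)"
    obtain r1 r2 where p: "p = (r1, r2)" by fastforce
    show "act_W ni nn h v0 p = scale1 (of_int (chi ni h)) (\<lambda>(r1, r2). f r1 * g r2) p"
      using polytabloid_comp[OF T0_tableau[OF pl] q1, of r1] polytabloid_comp[OF T0_tableau[OF pm] q2, of r2]
      by (simp add: p act_W_eq v0_def e1_def e2_def f_def g_def scale1_def)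
  qed
  show ?thesis unfolding eq tensor_specht_def
    by (rule span_scale1, rule span_base1) (use f g in blast)
qed

end


context eqcase begin

lemma HH_B: "x \<in> HH \<Longrightarrow> x \<in> signed_perm_mats nn"
  by (simp add: young_sub_def)

lemma one_facts: "sp_perm (1\<^sub>m nn) = id" "\<And>j. j < nn \<Longrightarrow> sp_sign (1\<^sub>m nn) j = 1" "1\<^sub>m nn \<in> HH"
proof -
  show p: "sp_perm (1\<^sub>m nn) = id" unfolding one_spm by (rule spm_sp_perm) (auto simp: permutes_id)
  show "\<And>j. j < nn \<Longrightarrow> sp_sign (1\<^sub>m nn) j = 1" unfolding one_spm by (rule spm_sp_sign) (auto simp: permutes_id)
  show "1\<^sub>m nn \<in> HH" using one_B p by (intro young_subI) auto
qed

lemma act_W_one: "act_W ni nn (1\<^sub>m nn) w = w"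
proof
  fix p :: "(nat \<Rightarrow> nat) \<times> (nat \<Rightarrow> nat)"
  obtain r1 r2 where p: "p = (r1, r2)" by fastforce
  have "chi ni (1\<^sub>m nn) = 1" unfolding chi_def using one_facts(2) by (intro prod.neutral) auto
  thus "act_W ni nn (1\<^sub>m nn) w p = w p" by (simp add: p act_W_eq one_facts(1) pi_id)
qed

lemma H_left_rev:
  assumes h: "h \<in> HH" and g: "g \<in> signed_perm_mats nn" and hg: "h * g \<in> HH"
  shows "g \<in> HH"
proof (rule young_subI[OF g])
  fix e assume e: "e < ni"
  note Fh = H_facts[OF h le_add1]
  have "sp_perm (h * g) e < ni" using hg e by (simp add: young_sub_def)
  hence lt: "sp_perm h (sp_perm g e) < ni" using B_mult(2)[OF HH_B[OF h] g] by simp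
  show "sp_perm g e < ni"
  proof (rule ccontr)
    assume "\<not> sp_perm g e < ni"
    moreover have "sp_perm g e < nn" using B_facts(2)[OF g] e by simp
    ultimately have "ni \<le> sp_perm h (sp_perm g e)" using Fh(3) by simp
    thus False using lt by simp
  qed
qed

lemma F0_zero: "x \<notin> HH \<Longrightarrow> F0 x = 0"
  by (simp add: F0_def)

lemma F0_W: "F0 x \<in> tensor_specht lam mu"
proof (cases "x \<in> HH")
  case True thus ?thesis using v0_in_W by (simp add: F0_def)
next
  case False thus ?thesis unfolding F0_def tensor_specht_def using span_zero1 by simp
qed

lemma F0_left: "h \<in> HH \<Longrightarrow> g \<in> signed_perm_mats nn \<Longrightarrow> F0 (h * g) = act_W ni nn h (F0 g)"
proof -
  assume h: "h \<in> HH" and g: "g \<in> signed_perm_mats nn"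
  show ?thesis
  proof (cases "g \<in> HH")
    case True
    thus ?thesis using H_mult[OF h True le_add1] act_W_mult[OF h True le_add1] by (simp add: F0_def)
  next
    case False
    hence "h * g \<notin> HH" using H_left_rev[OF h g] by blast
    thus ?thesis using False by (simp add: F0_def act_W_zero)
  qed
qed

lemma phi0_hom: "phi0 \<in> hom_sgn PP lam mu"
proof -
  have ind: "phi0 c \<in> ind_rep lam mu" for c
  proof -
    have "phi0 c x = 0" if "x \<notin> signed_perm_mats nn" for x
      using that HH_B F0_zero[of x] by (auto simp: phi0_def scale2_def scale1_def fun_eq_iff)
    moreover have "phi0 c g \<in> tensor_specht lam mu" for g
      unfolding phi0_def scale2_def tensor_specht_def
      by (rule span_scale1) (use F0_W in \<open>simp add: tensor_specht_def\<close>)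
    moreover have "phi0 c (h * g) = act_W ni nn h (phi0 c g)" if "h \<in> HH" "g \<in> signed_perm_mats nn" for h g
      using F0_left[OF that] by (simp add: phi0_def scale2_def act_W_scale)
    ultimately show ?thesis by (simp add: ind_rep_def Let_def)
  qed
  have add: "phi0 (c + d) = phi0 c + phi0 d" for c d
    by (simp add: phi0_def scale2_def scale1_def fun_eq_iff algebra_simps)
  have hom: "phi0 (a * c) = scale2 a (phi0 c)" for a c
    by (simp add: phi0_def scale2_def scale1_def fun_eq_iff algebra_simps)
  have eqv: "phi0 (of_int (det g) * c) = act_ind nn g (phi0 c)" if g: "g \<in> PP" for g c
  proof
    fix x
    have gH: "g \<in> HH" by (rule P_H[OF g])
    show "phi0 (of_int (det g) * c) x = act_ind nn g (phi0 c) x"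
    proof (cases "x \<in> signed_perm_mats nn")
      case False
      hence "x \<notin> HH" using HH_B by blast
      thus ?thesis using False by (simp add: act_ind_def phi0_def scale2_def scale1_def F0_zero fun_eq_iff)
    next
      case xB: True
      show ?thesis
      proof (cases "x \<in> HH")
        case True
        have "F0 (x * g) = act_W ni nn x (act_W ni nn g v0)"
          using H_mult[OF True gH le_add1] act_W_mult[OF True gH le_add1] by (simp add: F0_def)
        also have "act_W ni nn g v0 = scale1 (of_int (det g)) v0"
          using v0_eigen[OF g] by (simp add: fun_eq_iff scale1_def)
        finally have "F0 (x * g) = scale1 (of_int (det g)) (F0 x)" using True by (simp add: act_W_scale F0_def)
        thus ?thesis using xB by (simp add: act_ind_def phi0_def scale2_def scale1_def fun_eq_iff)
      next
        case False
        hence "x * g \<notin> HH" using H_mult_rev[OF xB gH _ le_add1] by blast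
        thus ?thesis using False xB by (simp add: act_ind_def phi0_def scale2_def scale1_def F0_zero fun_eq_iff)
      qed
    qed
  qed
  show ?thesis unfolding hom_sgn_def Let_def using ind add hom eqv by blast
qed

definition "t1 = tabloid_of lam (T0 lam)"
definition "t2 = tabloid_of mu (T0 mu)"

lemma e_at:
  assumes p1: "\<pi>1 \<in> col_stab lam (T0 lam)" and p2: "\<pi>2 \<in> col_stab mu (T0 mu)"
  shows "v0 (tabloid_of lam (\<pi>1 \<circ> T0 lam), tabloid_of mu (\<pi>2 \<circ> T0 mu)) = of_int (sign \<pi>1 * sign \<pi>2)"
  using polytabloid_at[OF T0_tableau[OF pl] p1] polytabloid_at[OF T0_tableau[OF pm] p2]
  by (simp add: v0_def e1_def e2_def)

lemma v0_t: "v0 (t1, t2) = 1"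
  using e_at[OF colstab_id[OF T0_tableau[OF pl]] colstab_id[OF T0_tableau[OF pm]]] by (simp add: t1_def t2_def)

lemma phi0_nz: "phi0 \<noteq> 0"
proof
  assume "phi0 = 0"
  hence "phi0 1 (1\<^sub>m nn) (t1, t2) = 0" by simp
  moreover have "phi0 1 (1\<^sub>m nn) (t1, t2) = 1"
    using one_facts(3) act_W_one v0_t by (simp add: phi0_def scale2_def scale1_def F0_def)
  ultimately show False by simp
qed

end


context eqcase begin

lemma upper:
  assumes phi: "\<phi> \<in> hom_sgn PP lam mu"
  shows "\<phi> = scale3 (\<phi> 1 (1\<^sub>m nn) (t1, t2)) phi0"
proof -
  define c where "c = \<phi> 1 (1\<^sub>m nn) (t1, t2)"
  define w where "w = \<phi> 1 (1\<^sub>m nn)"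
  have oneB: "1\<^sub>m nn \<in> signed_perm_mats nn" by (rule one_B)
  have wW: "w \<in> tensor_specht lam mu" unfolding w_def by (rule ind_repD(2)[OF hom_sgnD(1)[OF phi] oneB])
  have eig: "act_W ni nn g w p = of_int (det g) * w p" if g: "g \<in> PP" for g p
  proof -
    have gB: "g \<in> signed_perm_mats nn" by (rule P_Bn[OF g])
    have "g * 1\<^sub>m nn = 1\<^sub>m nn * g" using B_facts(1)[OF gB] by simp
    thus ?thesis unfolding w_def by (rule hom_eigen[OF phi g oneB P_H[OF g]])
  qed
  have tP: "trm nn a b \<in> PP" if "a < nn" "b < nn" "blk (al @ be) a = blk (al @ be) b" for a b
    using trm_P[of a al be b] that nps by simp
  have val: "w (tabloid_of lam (\<pi>1 \<circ> T0 lam), tabloid_of mu (\<pi>2 \<circ> T0 mu)) = of_int (sign \<pi>1 * sign \<pi>2) * c"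
    if p1: "\<pi>1 \<in> col_stab lam (T0 lam)" and p2: "\<pi>2 \<in> col_stab mu (T0 mu)" for \<pi>1 \<pi>2
  proof -
    define g where "g = spm nn (comb ni nn \<pi>1 \<pi>2) (\<lambda>_. 1)"
    note PB = Pbuild[OF p1 p2, folded g_def]
    let ?r1 = "tabloid_of lam (\<pi>1 \<circ> T0 lam)" and ?r2 = "tabloid_of mu (\<pi>2 \<circ> T0 mu)"
    have q1: "\<pi>1 permutes {0..<ni}" using colstab_permutes[OF T0_tableau[OF pl] p1] .
    have q2: "\<pi>2 permutes {0..<m2}" using colstab_permutes[OF T0_tableau[OF pm] p2] .
    have c1: "?r1 \<circ> \<pi>1 = t1"
      using tabloid_comp[OF T0_tableau[OF pl] q1] perm_inv_simps[OF q1] by (auto simp: fun_eq_iff t1_def)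
    have c2: "?r2 \<circ> \<pi>2 = t2"
      using tabloid_comp[OF T0_tableau[OF pm] q2] perm_inv_simps[OF q2] by (auto simp: fun_eq_iff t2_def)
    have "act_W ni nn g w (?r1, ?r2) = of_int (det g) * w (?r1, ?r2)" by (rule eig[OF PB(1)])
    moreover have "act_W ni nn g w (?r1, ?r2) = c"
      unfolding act_W_eq PB(2,3,5) c1 c2 by (simp add: c_def w_def)
    ultimately have hc: "c = of_int (sign \<pi>1 * sign \<pi>2) * w (?r1, ?r2)" using PB(4) by simp
    define z where "z = sign \<pi>1 * sign \<pi>2"
    have z2: "z * z = 1" unfolding z_def by (simp add: algebra_simps)
    have zz: "(of_int z :: complex) * of_int z = 1" by (simp only: of_int_mult[symmetric] z2 of_int_1)
    have "of_int z * c = (of_int z * of_int z) * w (?r1, ?r2)" using hc by (simp add: z_def mult.assoc)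
    also have "\<dots> = w (?r1, ?r2)" using zz by simp
    finally show ?thesis by (simp add: z_def)
  qed
  have supp: "\<exists>\<pi>1\<in>col_stab lam (T0 lam). \<exists>\<pi>2\<in>col_stab mu (T0 mu).
      r1 = tabloid_of lam (\<pi>1 \<circ> T0 lam) \<and> r2 = tabloid_of mu (\<pi>2 \<circ> T0 mu)"
    if nz: "w (r1, r2) \<noteq> 0" for r1 r2
  proof -
    have rc: "rowcounts lam r1" "rowcounts mu r2" using tensor_support[OF wW nz] by auto
    have inj1: "inj_on r1 {bs al c..<bs al (Suc c)}" if c: "c < length al" for c
    proof (rule inj_onI, rule ccontr)
      fix a b assume ab: "a \<in> {bs al c..<bs al (Suc c)}" "b \<in> {bs al c..<bs al (Suc c)}" "r1 a = r1 b" "a \<noteq> b"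
      have lta: "a < ni" "b < ni" using ab bs_le_sum[of al "Suc c"] sa by auto
      have "blk (al @ be) a = c" "blk (al @ be) b = c"
        using blk_append_left[of a al be] blk_append_left[of b al be] lta sa ab c by (auto intro!: blk_eq)
      hence trP: "trm nn a b \<in> PP" using tP lta by simp
      have "\<phi> 1 (1\<^sub>m nn) (r1 \<circ> Transposition.transpose a b, r2) = - \<phi> 1 (1\<^sub>m nn) (r1, r2)"
        using trans_low[OF phi trP oneB _ _ ab(4), of r1 r2] lta by (simp add: one_facts(1))
      moreover have "r1 \<circ> Transposition.transpose a b = r1" by (rule comp_transpose_same[of _ a b, OF ab(3)])
      ultimately show False using nz by (simp add: w_def)
    qed
    have inj2: "inj_on r2 {bs be c..<bs be (Suc c)}" if c: "c < length be" for c
    proof (rule inj_onI, rule ccontr)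
      fix a b assume ab: "a \<in> {bs be c..<bs be (Suc c)}" "b \<in> {bs be c..<bs be (Suc c)}" "r2 a = r2 b" "a \<noteq> b"
      have ltb: "a < m2" "b < m2" using ab bs_le_sum[of be "Suc c"] sb by auto
      have ba: "blk be a = c" "blk be b = c" using ab c by (auto intro!: blk_eq)
      have "blk (al @ be) (a + ni) = length al + c" "blk (al @ be) (b + ni) = length al + c"
        using blk_append_right[of al "a + ni" be] blk_append_right[of al "b + ni" be] ltb sa sb ba by auto
      hence trP: "trm nn (a + ni) (b + ni) \<in> PP" using tP ltb by simp
      have "\<phi> 1 (1\<^sub>m nn) (r1, r2 \<circ> Transposition.transpose a b) = - \<phi> 1 (1\<^sub>m nn) (r1, r2)"
        using trans_high[OF phi trP oneB, of r1 r2] ltb ab(4) by (simp add: one_facts(1))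
      moreover have "r2 \<circ> Transposition.transpose a b = r2" by (rule comp_transpose_same[of _ a b, OF ab(3)])
      ultimately show False using nz by (simp add: w_def)
    qed
    obtain \<pi>1 where p1: "\<pi>1 \<in> col_stab lam (T0 lam)" "r1 = tabloid_of lam (\<pi>1 \<circ> T0 lam)"
      using T0_realize[OF pl rc(1) inj1] by blast
    obtain \<pi>2 where p2: "\<pi>2 \<in> col_stab mu (T0 mu)" "r2 = tabloid_of mu (\<pi>2 \<circ> T0 mu)"
      using T0_realize[OF pm rc(2) inj2] by blast
    show ?thesis using p1 p2 by blast
  qed
  have wv: "w = scale1 c v0"
  proof
    fix p :: "(nat \<Rightarrow> nat) \<times> (nat \<Rightarrow> nat)"
    obtain r1 r2 where p: "p = (r1, r2)" by fastforce
    show "w p = scale1 c v0 p"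
    proof (cases "\<exists>\<pi>1\<in>col_stab lam (T0 lam). \<exists>\<pi>2\<in>col_stab mu (T0 mu).
      r1 = tabloid_of lam (\<pi>1 \<circ> T0 lam) \<and> r2 = tabloid_of mu (\<pi>2 \<circ> T0 mu)")
      case True
      then obtain \<pi>1 \<pi>2 where pp: "\<pi>1 \<in> col_stab lam (T0 lam)" "\<pi>2 \<in> col_stab mu (T0 mu)"
        "r1 = tabloid_of lam (\<pi>1 \<circ> T0 lam)" "r2 = tabloid_of mu (\<pi>2 \<circ> T0 mu)" by blast
      show ?thesis using val[OF pp(1,2)] e_at[OF pp(1,2)] pp(3,4) p by (simp add: scale1_def mult.commute)
    next
      case False
      hence w0: "w (r1, r2) = 0" using supp by blast
      have "v0 (r1, r2) = 0"
      proof (rule ccontr)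
        assume "v0 (r1, r2) \<noteq> 0"
        hence "e1 r1 \<noteq> 0" "e2 r2 \<noteq> 0" by (auto simp: v0_def)
        then obtain \<pi>1 \<pi>2 where "\<pi>1 \<in> col_stab lam (T0 lam)" "r1 = tabloid_of lam (\<pi>1 \<circ> T0 lam)"
          "\<pi>2 \<in> col_stab mu (T0 mu)" "r2 = tabloid_of mu (\<pi>2 \<circ> T0 mu)"
          using polytabloid_support[OF T0_tableau[OF pl]] polytabloid_support[OF T0_tableau[OF pm]]
          unfolding e1_def e2_def by metis
        thus False using False by blast
      qed
      thus ?thesis using w0 p by (simp add: scale1_def)
    qed
  qed
  have Fx: "\<phi> 1 x = scale1 c (F0 x)" for x
  proof (cases "x \<in> signed_perm_mats nn")
    case False
    hence "x \<notin> HH" using HH_B by blast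
    thus ?thesis using ind_repD(1)[OF hom_sgnD(1)[OF phi] False] by (simp add: F0_zero scale1_def fun_eq_iff)
  next
    case xB: True
    show ?thesis
    proof (cases "x \<in> HH")
      case True
      have "\<phi> 1 (x * 1\<^sub>m nn) = act_W ni nn x (\<phi> 1 (1\<^sub>m nn))"
        by (rule ind_repD(3)[OF hom_sgnD(1)[OF phi] True oneB])
      moreover have "x * 1\<^sub>m nn = x" using B_facts(1)[OF xB] by simp
      ultimately show ?thesis using True wv by (simp add: w_def act_W_scale F0_def)
    next
      case False
      have "\<exists>j<ni. \<not> sp_perm x j < ni" using False xB by (auto simp: young_sub_def)
      then obtain j where j: "j < ni" "\<not> sp_perm x j < ni" by blast
      have "\<exists>j'. ni \<le> j' \<and> j' < nn \<and> sp_perm x j' < ni"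
      proof (rule ccontr)
        assume "\<not> ?thesis"
        hence "ni \<le> sp_perm x j'" if "ni \<le> j'" "j' < nn" for j' using that by auto
        hence "sp_perm x j < ni" using preserve_low[OF B_perm[OF xB] _ j(1)] by auto
        thus False using j by simp
      qed
      then obtain j' where j': "ni \<le> j'" "j' < nn" "sp_perm x j' < ni" by blast
      have "flipm nn j' \<in> PP" using flipm_P[of al j' be] j' sa nps by simp
      hence "\<phi> 1 x = 0" using flip_kill[OF phi _ xB j'(2) j'(3)] by blast
      thus ?thesis using False by (simp add: F0_zero scale1_def fun_eq_iff)
    qed
  qed
  show ?thesis
  proof (rule ext)
    fix d
    show "\<phi> d = scale3 (\<phi> 1 (1\<^sub>m nn) (t1, t2)) phi0 d"
      unfolding hom_scale[OF phi, of d] c_def[symmetric]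
      using Fx by (simp add: scale3_def scale2_def scale1_def phi0_def fun_eq_iff)
  qed
qed

theorem mult_eq_one: "mult_sgn PP lam mu = 1"
proof -
  have "hom_sgn PP lam mu \<subseteq> Modules.module.span scale3 {phi0}"
  proof
    fix \<phi> assume phi: "\<phi> \<in> hom_sgn PP lam mu"
    have "phi0 \<in> Modules.module.span scale3 {phi0}" by (rule Modules.module.span_base[OF ms3]) simp
    hence "scale3 (\<phi> 1 (1\<^sub>m nn) (t1, t2)) phi0 \<in> Modules.module.span scale3 {phi0}"
      by (rule Modules.module.span_scale[OF ms3])
    thus "\<phi> \<in> Modules.module.span scale3 {phi0}" using upper[OF phi] by simp
  qed
  thus ?thesis unfolding mult_sgn_def by (rule dim3_one[OF phi0_hom phi0_nz])
qed

end

lemma eq_one: "is_partition lam \<Longrightarrow> is_partition mu \<Longrightarrow>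
  mult_sgn (gen_parabolic (conj_part lam) (conj_part mu)) lam mu = 1"
proof -
  assume "is_partition lam" "is_partition mu"
  then interpret eqcase lam mu by unfold_locales
  show ?thesis by (rule mult_eq_one)
qed

theorem proposition4p16:
  shows
   "(\<forall>lam \<mu> \<nu> \<sigma>. is_partition lam \<and> is_partition \<mu> \<and> is_partition \<nu> \<and> is_partition \<sigma> \<and>
        sum_list lam + sum_list \<mu> = sum_list \<nu> + sum_list \<sigma> \<longrightarrow>
        (pair_succ (\<nu>, \<sigma>) (lam, \<mu>) \<longrightarrow>
            mult_sgn (gen_parabolic (conj_part \<nu>) (conj_part \<sigma>)) lam \<mu> = 0) \<and>
        ((\<nu>, \<sigma>) = (lam, \<mu>) \<longrightarrow>
            mult_sgn (gen_parabolic (conj_part \<nu>) (conj_part \<sigma>)) lam \<mu> = 1))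
    \<and>
    (\<forall>(n::nat) (L :: (nat list \<times> nat list) list).
        set L = {(lam, \<mu>). is_partition lam \<and> is_partition \<mu> \<and> sum_list lam + sum_list \<mu> = n} \<and>
        (\<forall>j k. j < k \<and> k < length L \<longrightarrow> pair_succ (L ! j) (L ! k)) \<longrightarrow>
        (\<forall>i < length L.
           let P = (\<lambda>j. gen_parabolic (conj_part (fst (L ! j))) (conj_part (snd (L ! j))));
               S = {Q \<in> gen_parabolics n. mult_sgn Q (fst (L ! i)) (snd (L ! i)) > 0}
           in P i \<in> S \<and> (\<forall>j < i. P j \<notin> S)))"
proof (intro conjI allI impI)
  fix lam mu nu sigma :: "nat list"
  assume a: "is_partition lam \<and> is_partition mu \<and> is_partition nu \<and> is_partition sigma \<and>
        sum_list lam + sum_list mu = sum_list nu + sum_list sigma"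
  {
    assume "pair_succ (nu, sigma) (lam, mu)"
    thus "mult_sgn (gen_parabolic (conj_part nu) (conj_part sigma)) lam mu = 0"
      using vanish a by blast
  }
  {
    assume "(nu, sigma) = (lam, mu)"
    thus "mult_sgn (gen_parabolic (conj_part nu) (conj_part sigma)) lam mu = 1"
      using eq_one a by simp
  }
next
  fix n :: nat and L :: "(nat list \<times> nat list) list" and i :: nat
  assume a: "set L = {(lam, \<mu>). is_partition lam \<and> is_partition \<mu> \<and> sum_list lam + sum_list \<mu> = n} \<and>
        (\<forall>j k. j < k \<and> k < length L \<longrightarrow> pair_succ (L ! j) (L ! k))"
  assume i: "i < length L"
  have mem: "is_partition (fst (L ! k)) \<and> is_partition (snd (L ! k)) \<and> sum_list (fst (L ! k)) + sum_list (snd (L ! k)) = n"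
    if "k < length L" for k
  proof -
    have "L ! k \<in> set L" using that by simp
    hence "L ! k \<in> {(lam, \<mu>). is_partition lam \<and> is_partition \<mu> \<and> sum_list lam + sum_list \<mu> = n}"
      using conjunct1[OF a] by simp
    thus ?thesis by (simp add: case_prod_beta)
  qed
  define P where "P = (\<lambda>j. gen_parabolic (conj_part (fst (L ! j))) (conj_part (snd (L ! j))))"
  define S where "S = {Q \<in> gen_parabolics n. mult_sgn Q (fst (L ! i)) (snd (L ! i)) > 0}"
  have inS: "P i \<in> S"
  proof -
    have "P i \<in> gen_parabolics n"
      unfolding gen_parabolics_def P_def
      using mem[OF i] conj_pos conj_sum by fastforce
    moreover have "mult_sgn (P i) (fst (L ! i)) (snd (L ! i)) = 1"
      unfolding P_def using eq_one mem[OF i] by blast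
    ultimately show ?thesis unfolding S_def by simp
  qed
  have notS: "P j \<notin> S" if j: "j < i" for j
  proof -
    have jl: "j < length L" using j i by simp
    have succ: "pair_succ (fst (L ! j), snd (L ! j)) (fst (L ! i), snd (L ! i))" using a j i by simp
    have "mult_sgn (P j) (fst (L ! i)) (snd (L ! i)) = 0"
      unfolding P_def by (rule vanish) (use mem[OF i] mem[OF jl] succ in auto)
    thus ?thesis unfolding S_def by simp
  qed
  show "let P = (\<lambda>j. gen_parabolic (conj_part (fst (L ! j))) (conj_part (snd (L ! j))));
               S = {Q \<in> gen_parabolics n. mult_sgn Q (fst (L ! i)) (snd (L ! i)) > 0}
           in P i \<in> S \<and> (\<forall>j < i. P j \<notin> S)"
    using inS notS unfolding P_def S_def Let_def by blast
qed

end
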